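(* Let ${}_{\mathfrak Y}\mathfrak B_{\mathfrak X}$ be a left-free graph of bisets, and let $\dagger\in\mathfrak Y$, $*\in\mathfrak X$ be vertices. Then $\pi_1(\mathfrak B,\dagger,* )$ is a left-free biset, of degree (number of left orbits) equal to that of $\bigsqcup_{z\in\rho^{-1}( * )}B_z$.
   Context: Graphs and graphs of groups. A graph is a set $V\sqcup E$ with $x\mapsto x^-\in V$, $x\mapsto\bar x$, $\bar{\bar x}=x$, $x=x^-\iff x=\bar x\iff x\in V$; $x^+=(\bar x)^-$. Graph morphisms commute with these (may send edges to vertices); simplicial ones send edges to edges. A graph of groups is a connected graph with groups $G_x$ and homomorphisms $g\mapsto g^-\colon G_x\to G_{x^-}$, $g\mapsto\bar g\colon G_x\to G_{\bar x}$ ($G_x\to G_{\bar x}\to G_x$ identity, both identity for vertices); fundamental groupoid $\pi_1(\mathfrak X)$: objects $V$, generated by the $x\in\mathfrak X$ and elements of the $G_v$, relations of the $G_v$, $v=1\in G_v$, $x\bar x=1$, $g^-x=xg^+$ ($g^+=(\bar g)^-$); $\pi_1(\mathfrak X,v,w)$ = morphisms from $v$ to $w$. Graphs of bisets: a graph $\mathfrak B$, graph morphisms $\lambda\colon\mathfrak B\to\mathfrak Y$, $\rho\colon\mathfrak B\to\mathfrak X$, $G_{\lambda(z)}$-$G_{\rho(z)}$-bisets $B_z$ and congruences $b\mapsto b^-\colon B_z\to B_{z^-}$, $b\mapsto\bar b\colon B_z\to B_{\bar z}$ (same axioms), $b^+=(\bar b)^-$. Fundamental biset $\pi_1(\mathfrak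 B,\dagger,* )$: $\bigsqcup_{z\in V(\mathfrak B)}\pi_1(\mathfrak Y,\dagger,\lambda(z))\otimes_{G_{\lambda(z)}}B_z\otimes_{G_{\rho(z)}}\pi_1(\mathfrak X,\rho(z),* )$ modulo $q\otimes b^-\otimes p=q\lambda(z)\otimes b^+\otimes\overline{\rho(z)}p$ for edges $z$ ($\lambda(z),\overline{\rho(z)}$ as groupoid morphisms, trivial if vertices), a $\pi_1(\mathfrak Y,\dagger)$-$\pi_1(\mathfrak X,* )$-biset. Left-fibrant: $\rho$ simplicial and for every vertex $v\in\mathfrak B$ and edge $f\in\mathfrak X$ with $f^-=\rho(v)$, the map $\bigsqcup_{e\in\rho^{-1}(f),\,e^-=v}G_{\lambda(v)}\otimes_{G_{\lambda(e)}}B_e\to B_v$, $g\otimes b\mapsto gb^-$, is an isomorphism of $G_{\lambda(v)}$-$G_f$-bisets. Left-free: left-fibrant and every $B_z$ free as a left $G_{\lambda(z)}$-set. *)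

theory Defs
  imports "HOL-Algebra.Group" "HOL-Library.Equipollence"
begin

text \<open>A graph is a set (vertices and edges together) with maps x -> x^- and x -> bar x.\<close>
record 'x graph =
  gel  :: "'x set"
  gsrc :: "'x \<Rightarrow> 'x"
  grev :: "'x \<Rightarrow> 'x"

definition is_graph :: "('x,'m) graph_scheme \<Rightarrow> bool" where
  "is_graph X \<longleftrightarrow> (\<forall>x\<in>gel X. gsrc X x \<in> gel X \<and> grev X x \<in> gel X
      \<and> grev X (grev X x) = x
      \<and> gsrc X (gsrc X x) = gsrc X x
      \<and> (x = gsrc X x \<longleftrightarrow> x = grev X x))"

definition gverts :: "('x,'m) graph_scheme \<Rightarrow> 'x set" where
  "gverts X = {x \<in> gel X. gsrc X x = x}"

definition gedges :: "('x,'m) graph_scheme \<Rightarrow> 'x set" where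
  "gedges X = {x \<in> gel X. gsrc X x \<noteq> x}"

definition gtgt :: "('x,'m) graph_scheme \<Rightarrow> 'x \<Rightarrow> 'x" where
  "gtgt X x = gsrc X (grev X x)"

definition graph_morphism :: "('z,'m) graph_scheme \<Rightarrow> ('x,'n) graph_scheme \<Rightarrow> ('z \<Rightarrow> 'x) \<Rightarrow> bool" where
  "graph_morphism B X f \<longleftrightarrow> (\<forall>z\<in>gel B. f z \<in> gel X
      \<and> f (gsrc B z) = gsrc X (f z) \<and> f (grev B z) = grev X (f z))"

definition simplicial :: "('z,'m) graph_scheme \<Rightarrow> ('x,'n) graph_scheme \<Rightarrow> ('z \<Rightarrow> 'x) \<Rightarrow> bool" where
  "simplicial B X f \<longleftrightarrow> graph_morphism B X f \<and> (\<forall>z\<in>gedges B. f z \<in> gedges X)"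

text \<open>ggrp x is the group G_x; ghm x is g -> g^- : G_x -> G_{x^-}; gbr x is g -> bar g : G_x -> G_{bar x}.\<close>
record ('x,'g) gog = "'x graph" +
  ggrp :: "'x \<Rightarrow> 'g monoid"
  ghm  :: "'x \<Rightarrow> 'g \<Rightarrow> 'g"
  gbr  :: "'x \<Rightarrow> 'g \<Rightarrow> 'g"

datatype ('x,'g) letter = Edg 'x | Elt 'x 'g

text \<open>ok X v w u: the word w is a well-formed morphism from v to u.\<close>
fun ok :: "('x,'g) gog \<Rightarrow> 'x \<Rightarrow> ('x,'g) letter list \<Rightarrow> 'x \<Rightarrow> bool" where
  "ok X v [] u = (v \<in> gverts X \<and> v = u)"
| "ok X v (Edg x # ws) u = (x \<in> gedges X \<and> gsrc X x = v \<and> ok X (gtgt X x) ws u)"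
| "ok X v (Elt y g # ws) u = (v \<in> gverts X \<and> y = v \<and> g \<in> carrier (ggrp X v) \<and> ok X v ws u)"

definition connected :: "('x,'g) gog \<Rightarrow> bool" where
  "connected X \<longleftrightarrow> (\<forall>v\<in>gverts X. \<forall>u\<in>gverts X. \<exists>ws. ok X v ws u)"

definition is_gog :: "('x,'g) gog \<Rightarrow> bool" where
  "is_gog X \<longleftrightarrow> is_graph X \<and> connected X \<and>
    (\<forall>x\<in>gel X. group (ggrp X x)
       \<and> ghm X x \<in> hom (ggrp X x) (ggrp X (gsrc X x))
       \<and> gbr X x \<in> hom (ggrp X x) (ggrp X (grev X x))
       \<and> (\<forall>g\<in>carrier (ggrp X x). gbr X (grev X x) (gbr X x g) = g)) \<and>
    (\<forall>v\<in>gverts X. \<forall>g\<in>carrier (ggrp X v). ghm X v g = g \<and> gbr X v g = g)"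

text \<open>Defining relations of the fundamental groupoid (as rewrite rules on words).\<close>
inductive grel :: "('x,'g) gog \<Rightarrow> ('x,'g) letter list \<Rightarrow> ('x,'g) letter list \<Rightarrow> bool"
  for X where
  mult: "v \<in> gverts X \<Longrightarrow> g \<in> carrier (ggrp X v) \<Longrightarrow> h \<in> carrier (ggrp X v) \<Longrightarrow>
     grel X [Elt v g, Elt v h] [Elt v (g \<otimes>\<^bsub>ggrp X v\<^esub> h)]"
| unit: "v \<in> gverts X \<Longrightarrow> grel X [Elt v \<one>\<^bsub>ggrp X v\<^esub>] []"
| inv: "x \<in> gedges X \<Longrightarrow> grel X [Edg x, Edg (grev X x)] []"
| edge: "x \<in> gedges X \<Longrightarrow> g \<in> carrier (ggrp X x) \<Longrightarrow>
     grel X [Elt (gsrc X x) (ghm X x g), Edg x]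
            [Edg x, Elt (gtgt X x) (ghm X (grev X x) (gbr X x g))]"

definition wstep :: "('x,'g) gog \<Rightarrow> 'x \<Rightarrow> ('x,'g) letter list \<Rightarrow> ('x,'g) letter list \<Rightarrow> bool" where
  "wstep X v a b \<longleftrightarrow> (\<exists>u l r w. grel X l r \<and> a = u @ l @ w \<and> b = u @ r @ w)
      \<and> (\<exists>t. ok X v a t) \<and> (\<exists>t. ok X v b t)"

text \<open>Equality of morphisms of the fundamental groupoid with source v.\<close>
definition weq :: "('x,'g) gog \<Rightarrow> 'x \<Rightarrow> ('x,'g) letter list \<Rightarrow> ('x,'g) letter list \<Rightarrow> bool" where
  "weq X v = (\<lambda>a b. wstep X v a b \<or> wstep X v b a)\<^sup>*\<^sup>*"

definition gword :: "('x,'g) gog \<Rightarrow> 'x \<Rightarrow> ('x,'g) letter list" where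
  "gword X x = (if gsrc X x = x then [] else [Edg x])"

definition is_biset :: "'g monoid \<Rightarrow> 'h monoid \<Rightarrow> 'b set \<Rightarrow> ('g \<Rightarrow> 'b \<Rightarrow> 'b) \<Rightarrow> ('b \<Rightarrow> 'h \<Rightarrow> 'b) \<Rightarrow> bool" where
  "is_biset G H S l r \<longleftrightarrow>
    (\<forall>g\<in>carrier G. \<forall>b\<in>S. l g b \<in> S) \<and> (\<forall>b\<in>S. l \<one>\<^bsub>G\<^esub> b = b) \<and>
    (\<forall>g\<in>carrier G. \<forall>g'\<in>carrier G. \<forall>b\<in>S. l (g \<otimes>\<^bsub>G\<^esub> g') b = l g (l g' b)) \<and>
    (\<forall>h\<in>carrier H. \<forall>b\<in>S. r b h \<in> S) \<and> (\<forall>b\<in>S. r b \<one>\<^bsub>H\<^esub> = b) \<and>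
    (\<forall>h\<in>carrier H. \<forall>h'\<in>carrier H. \<forall>b\<in>S. r b (h \<otimes>\<^bsub>H\<^esub> h') = r (r b h) h') \<and>
    (\<forall>g\<in>carrier G. \<forall>h\<in>carrier H. \<forall>b\<in>S. l g (r b h) = r (l g b) h)"

text \<open>A graph of bisets over Y (left) and X (right): the graph bgr, morphisms lam and rho,
  bisets bset z with left action bl z and right action br z, and congruences
  bm z : b -> b^- and bb z : b -> bar b.\<close>
record ('z,'y,'x,'b,'g,'h) gob =
  bgr  :: "'z graph"
  lam  :: "'z \<Rightarrow> 'y"
  rho  :: "'z \<Rightarrow> 'x"
  bset :: "'z \<Rightarrow> 'b set"
  bl   :: "'z \<Rightarrow> 'g \<Rightarrow> 'b \<Rightarrow> 'b"
  br   :: "'z \<Rightarrow> 'b \<Rightarrow> 'h \<Rightarrow> 'b"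
  bm   :: "'z \<Rightarrow> 'b \<Rightarrow> 'b"
  bb   :: "'z \<Rightarrow> 'b \<Rightarrow> 'b"

definition is_gob :: "('y,'g) gog \<Rightarrow> ('x,'h) gog \<Rightarrow> ('z,'y,'x,'b,'g,'h) gob \<Rightarrow> bool" where
  "is_gob Y X B \<longleftrightarrow> is_graph (bgr B) \<and>
    graph_morphism (bgr B) Y (lam B) \<and> graph_morphism (bgr B) X (rho B) \<and>
    (\<forall>z\<in>gel (bgr B).
       is_biset (ggrp Y (lam B z)) (ggrp X (rho B z)) (bset B z) (bl B z) (br B z)
     \<and> (\<forall>b\<in>bset B z. bm B z b \<in> bset B (gsrc (bgr B) z) \<and> bb B z b \<in> bset B (grev (bgr B) z)
          \<and> bb B (grev (bgr B) z) (bb B z b) = b)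
     \<and> (\<forall>g\<in>carrier (ggrp Y (lam B z)). \<forall>b\<in>bset B z.
          bm B z (bl B z g b) = bl B (gsrc (bgr B) z) (ghm Y (lam B z) g) (bm B z b)
        \<and> bb B z (bl B z g b) = bl B (grev (bgr B) z) (gbr Y (lam B z) g) (bb B z b))
     \<and> (\<forall>h\<in>carrier (ggrp X (rho B z)). \<forall>b\<in>bset B z.
          bm B z (br B z b h) = br B (gsrc (bgr B) z) (bm B z b) (ghm X (rho B z) h)
        \<and> bb B z (br B z b h) = br B (grev (bgr B) z) (bb B z b) (gbr X (rho B z) h))) \<and>
    (\<forall>v\<in>gverts (bgr B). \<forall>b\<in>bset B v. bm B v b = b \<and> bb B v b = b)"

text \<open>Left-fibrant: rho simplicial, and for every vertex v and edge f with f^- = rho v the map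
  from the disjoint union over e in rho^-1(f), e^- = v, of G_{lam v} (x)_{G_{lam e}} B_e to B_v,
  g (x) b -> g b^-, is bijective (equivalently an isomorphism of bisets, equivariance being
  automatic).  In G_{lam v} (x)_{G_{lam e}} B_e, (g k^-, b) = (g, k b) for k in G_{lam e}.\<close>
definition left_fibrant :: "('y,'g) gog \<Rightarrow> ('x,'h) gog \<Rightarrow> ('z,'y,'x,'b,'g,'h) gob \<Rightarrow> bool" where
  "left_fibrant Y X B \<longleftrightarrow> simplicial (bgr B) X (rho B) \<and>
    (\<forall>v\<in>gverts (bgr B). \<forall>f\<in>gedges X. gsrc X f = rho B v \<longrightarrow>
      (let Es = {e\<in>gedges (bgr B). rho B e = f \<and> gsrc (bgr B) e = v};
           Gv = ggrp Y (lam B v) in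
       (\<forall>c\<in>bset B v. \<exists>e\<in>Es. \<exists>g\<in>carrier Gv. \<exists>b\<in>bset B e. c = bl B v g (bm B e b)) \<and>
       (\<forall>e\<in>Es. \<forall>e'\<in>Es. \<forall>g\<in>carrier Gv. \<forall>g'\<in>carrier Gv. \<forall>b\<in>bset B e. \<forall>b'\<in>bset B e'.
          bl B v g (bm B e b) = bl B v g' (bm B e' b') \<longrightarrow>
          e = e' \<and> (\<exists>k\<in>carrier (ggrp Y (lam B e)).
                      g = g' \<otimes>\<^bsub>Gv\<^esub> ghm Y (lam B e) k \<and> b' = bl B e k b))))"

definition left_free_gob :: "('y,'g) gog \<Rightarrow> ('x,'h) gog \<Rightarrow> ('z,'y,'x,'b,'g,'h) gob \<Rightarrow> bool" where
  "left_free_gob Y X B \<longleftrightarrow> left_fibrant Y X B \<and>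
    (\<forall>z\<in>gel (bgr B). \<forall>g\<in>carrier (ggrp Y (lam B z)). \<forall>b\<in>bset B z.
        bl B z g b = b \<longrightarrow> g = \<one>\<^bsub>ggrp Y (lam B z)\<^esub>)"

type_synonym ('z,'y,'x,'b,'g,'h) brep =
  "('y,'g) letter list \<times> 'z \<times> 'b \<times> ('x,'h) letter list"

text \<open>Representatives q (x) b (x) p with z a vertex, q in pi1(Y,dag,lam z), b in B_z,
  p in pi1(X,rho z,st).\<close>
definition brep_ok :: "('y,'g) gog \<Rightarrow> ('x,'h) gog \<Rightarrow> ('z,'y,'x,'b,'g,'h) gob \<Rightarrow> 'y \<Rightarrow> 'x
    \<Rightarrow> ('z,'y,'x,'b,'g,'h) brep \<Rightarrow> bool" where
  "brep_ok Y X B dag st t \<longleftrightarrow> (case t of (q, z, b, p) \<Rightarrow>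
     z \<in> gverts (bgr B) \<and> ok Y dag q (lam B z) \<and> b \<in> bset B z \<and> ok X (rho B z) p st)"

inductive bstep_raw :: "('y,'g) gog \<Rightarrow> ('x,'h) gog \<Rightarrow> ('z,'y,'x,'b,'g,'h) gob \<Rightarrow> 'y
    \<Rightarrow> ('z,'y,'x,'b,'g,'h) brep \<Rightarrow> ('z,'y,'x,'b,'g,'h) brep \<Rightarrow> bool"
  for Y X B dag where
  left_word: "wstep Y dag q q' \<Longrightarrow> bstep_raw Y X B dag (q, z, b, p) (q', z, b, p)"
| right_word: "wstep X (rho B z) p p' \<Longrightarrow> bstep_raw Y X B dag (q, z, b, p) (q, z, b, p')"
| left_tensor: "g \<in> carrier (ggrp Y (lam B z)) \<Longrightarrow>
    bstep_raw Y X B dag (q @ [Elt (lam B z) g], z, b, p) (q, z, bl B z g b, p)"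
| right_tensor: "h \<in> carrier (ggrp X (rho B z)) \<Longrightarrow>
    bstep_raw Y X B dag (q, z, br B z b h, p) (q, z, b, Elt (rho B z) h # p)"
| edge: "z \<in> gedges (bgr B) \<Longrightarrow> b \<in> bset B z \<Longrightarrow>
    bstep_raw Y X B dag (q, gsrc (bgr B) z, bm B z b, p)
      (q @ gword Y (lam B z), gtgt (bgr B) z, bm B (grev (bgr B) z) (bb B z b),
       gword X (grev X (rho B z)) @ p)"

definition bstep where
  "bstep Y X B dag st t t' \<longleftrightarrow> bstep_raw Y X B dag t t'
     \<and> brep_ok Y X B dag st t \<and> brep_ok Y X B dag st t'"

text \<open>Equality in the fundamental biset pi1(B,dag,st).\<close>
definition beq where
  "beq Y X B dag st = (\<lambda>t t'. bstep Y X B dag st t t' \<or> bstep Y X B dag st t' t)\<^sup>*\<^sup>*"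

definition bact :: "('y,'g) letter list \<Rightarrow> ('z,'y,'x,'b,'g,'h) brep \<Rightarrow> ('z,'y,'x,'b,'g,'h) brep" where
  "bact \<gamma> t = (case t of (q, z, b, p) \<Rightarrow> (\<gamma> @ q, z, b, p))"

definition fbiset_left_free where
  "fbiset_left_free Y X B dag st \<longleftrightarrow>
    (\<forall>\<gamma> t. ok Y dag \<gamma> dag \<longrightarrow> brep_ok Y X B dag st t \<longrightarrow>
       beq Y X B dag st (bact \<gamma> t) t \<longrightarrow> weq Y dag \<gamma> [])"

definition fbiset_orbits where
  "fbiset_orbits Y X B dag st =
     {t. brep_ok Y X B dag st t} //
     {(t, t'). brep_ok Y X B dag st t \<and> brep_ok Y X B dag st t' \<and>
        (\<exists>\<gamma>. ok Y dag \<gamma> dag \<and> beq Y X B dag st (bact \<gamma> t) t')}"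

definition fiber_orbits where
  "fiber_orbits Y X B st =
     (SIGMA z:{z\<in>gel (bgr B). rho B z = st}.
        bset B z // {(b, b'). b \<in> bset B z \<and> b' \<in> bset B z \<and>
                        (\<exists>g\<in>carrier (ggrp Y (lam B z)). b' = bl B z g b)})"

end

theory Submission
  imports Defs
begin


lemma gr_src_vert: "is_graph X \<Longrightarrow> x \<in> gel X \<Longrightarrow> gsrc X x \<in> gverts X"
  unfolding is_graph_def gverts_def by auto

lemma gr_rev_el: "is_graph X \<Longrightarrow> x \<in> gel X \<Longrightarrow> grev X x \<in> gel X"
  unfolding is_graph_def by auto

lemma gr_revrev: "is_graph X \<Longrightarrow> x \<in> gel X \<Longrightarrow> grev X (grev X x) = x"
  unfolding is_graph_def by auto

lemma gr_tgt_vert: "is_graph X \<Longrightarrow> x \<in> gel X \<Longrightarrow> gtgt X x \<in> gverts X"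
  unfolding gtgt_def by (simp add: gr_rev_el gr_src_vert)

lemma gr_tgt_rev: "is_graph X \<Longrightarrow> x \<in> gel X \<Longrightarrow> gtgt X (grev X x) = gsrc X x"
  unfolding gtgt_def by (simp add: gr_revrev)

lemma gr_rev_edge: "is_graph X \<Longrightarrow> x \<in> gedges X \<Longrightarrow> grev X x \<in> gedges X"
proof -
  assume g: "is_graph X" and x: "x \<in> gedges X"
  then have xe: "x \<in> gel X" "gsrc X x \<noteq> x" unfolding gedges_def by auto
  from g xe have r: "grev X x \<in> gel X" "grev X (grev X x) = x" "(x = gsrc X x) = (x = grev X x)"
    unfolding is_graph_def by auto
  from g r(1) have "(grev X x = gsrc X (grev X x)) = (grev X x = grev X (grev X x))"
    unfolding is_graph_def by blast
  with r xe have "gsrc X (grev X x) \<noteq> grev X x" by metis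
  with r show ?thesis unfolding gedges_def by blast
qed

lemma gr_vert_rev: "is_graph X \<Longrightarrow> v \<in> gverts X \<Longrightarrow> grev X v = v"
  unfolding is_graph_def gverts_def by auto

lemma gr_edges_el: "x \<in> gedges X \<Longrightarrow> x \<in> gel X"
  unfolding gedges_def by auto

lemma gr_verts_el: "x \<in> gverts X \<Longrightarrow> x \<in> gel X"
  unfolding gverts_def by auto

lemma gr_vert_src: "x \<in> gverts X \<Longrightarrow> gsrc X x = x"
  unfolding gverts_def by auto

lemma gr_el_cases: "x \<in> gel X \<Longrightarrow> x \<in> gverts X \<or> x \<in> gedges X"
  unfolding gverts_def gedges_def by auto

lemma gr_vert_tgt: "is_graph X \<Longrightarrow> v \<in> gverts X \<Longrightarrow> gtgt X v = v"
  unfolding gtgt_def by (simp add: gr_vert_rev gr_vert_src)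

lemma gm_vert: "graph_morphism B X f \<Longrightarrow> is_graph B \<Longrightarrow> z \<in> gverts B \<Longrightarrow> f z \<in> gverts X"
  unfolding graph_morphism_def gverts_def by auto

lemma gm_src: "graph_morphism B X f \<Longrightarrow> z \<in> gel B \<Longrightarrow> f (gsrc B z) = gsrc X (f z)"
  unfolding graph_morphism_def by auto

lemma gm_rev: "graph_morphism B X f \<Longrightarrow> z \<in> gel B \<Longrightarrow> f (grev B z) = grev X (f z)"
  unfolding graph_morphism_def by auto

lemma gm_el: "graph_morphism B X f \<Longrightarrow> z \<in> gel B \<Longrightarrow> f z \<in> gel X"
  unfolding graph_morphism_def by auto

lemma gm_tgt: "graph_morphism B X f \<Longrightarrow> is_graph B \<Longrightarrow> z \<in> gel B \<Longrightarrow> f (gtgt B z) = gtgt X (f z)"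
  unfolding gtgt_def by (simp add: gm_rev gm_src gr_rev_el)

lemma ok_vert: "is_graph X \<Longrightarrow> ok X v a u \<Longrightarrow> v \<in> gverts X \<and> u \<in> gverts X"
proof (induction a arbitrary: v)
  case Nil
  from Nil.prems(2) have "v \<in> gverts X" "v = u" by simp_all blast
  then show ?case by blast
next
  case (Cons l a)
  show ?case
  proof (cases l)
    case (Edg x)
    with Cons.prems have "x \<in> gedges X" "gsrc X x = v" "ok X (gtgt X x) a u" by auto
    with Cons.IH[of "gtgt X x"] Cons.prems(1) show ?thesis
      using gr_src_vert[of X x] gr_edges_el[of x X] by blast
  next
    case (Elt y g)
    with Cons.prems have "v \<in> gverts X" "ok X v a u" by auto
    with Cons.IH[of v] Cons.prems(1) show ?thesis by blast
  qed
qed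

lemma ok_append: "is_graph X \<Longrightarrow> ok X v (a @ c) u \<longleftrightarrow> (\<exists>w. ok X v a w \<and> ok X w c u)"
proof (induction a arbitrary: v)
  case Nil
  show ?case
  proof
    assume "ok X v ([] @ c) u"
    with ok_vert[OF Nil] show "\<exists>w. ok X v [] w \<and> ok X w c u" by simp
  next
    assume "\<exists>w. ok X v [] w \<and> ok X w c u"
    then obtain w where "ok X v [] w" "ok X w c u" by blast
    then show "ok X v ([] @ c) u" by simp
  qed
next
  case (Cons l a)
  show ?case
  proof (cases l)
    case (Edg x)
    have "ok X v ((l # a) @ c) u = (x \<in> gedges X \<and> gsrc X x = v \<and> ok X (gtgt X x) (a @ c) u)"
      using Edg by simp
    also have "\<dots> = (x \<in> gedges X \<and> gsrc X x = v \<and> (\<exists>w. ok X (gtgt X x) a w \<and> ok X w c u))"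
      using Cons.IH[OF Cons.prems] by simp
    also have "\<dots> = (\<exists>w. ok X v (l # a) w \<and> ok X w c u)" using Edg by simp
    finally show ?thesis .
  next
    case (Elt y g)
    have "ok X v ((l # a) @ c) u = (v \<in> gverts X \<and> y = v \<and> g \<in> carrier (ggrp X v) \<and> ok X v (a @ c) u)"
      using Elt by simp
    also have "\<dots> = (v \<in> gverts X \<and> y = v \<and> g \<in> carrier (ggrp X v) \<and> (\<exists>w. ok X v a w \<and> ok X w c u))"
      using Cons.IH[OF Cons.prems] by simp
    also have "\<dots> = (\<exists>w. ok X v (l # a) w \<and> ok X w c u)" using Elt by simp
    finally show ?thesis .
  qed
qed

lemma ok_unique: "ok X v a u \<Longrightarrow> ok X v a u' \<Longrightarrow> u = u'"
proof (induction a arbitrary: v)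
  case Nil then show ?case by simp
next
  case (Cons l a)
  then show ?case by (cases l) auto
qed


lemma gog_graph: "is_gog X \<Longrightarrow> is_graph X"
  unfolding is_gog_def by simp

lemma gog_group: "is_gog X \<Longrightarrow> x \<in> gel X \<Longrightarrow> group (ggrp X x)"
  unfolding is_gog_def by simp

lemma gog_hm: "is_gog X \<Longrightarrow> x \<in> gel X \<Longrightarrow> ghm X x \<in> hom (ggrp X x) (ggrp X (gsrc X x))"
  unfolding is_gog_def by simp

lemma gog_br: "is_gog X \<Longrightarrow> x \<in> gel X \<Longrightarrow> gbr X x \<in> hom (ggrp X x) (ggrp X (grev X x))"
  unfolding is_gog_def by simp

lemma gog_vid: "is_gog X \<Longrightarrow> v \<in> gverts X \<Longrightarrow> g \<in> carrier (ggrp X v) \<Longrightarrow> ghm X v g = g \<and> gbr X v g = g"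
  unfolding is_gog_def by simp

lemma gog_hm_car: "is_gog X \<Longrightarrow> x \<in> gel X \<Longrightarrow> g \<in> carrier (ggrp X x) \<Longrightarrow> ghm X x g \<in> carrier (ggrp X (gsrc X x))"
  by (rule hom_in_carrier[OF gog_hm])

lemma gog_br_car: "is_gog X \<Longrightarrow> x \<in> gel X \<Longrightarrow> g \<in> carrier (ggrp X x) \<Longrightarrow> gbr X x g \<in> carrier (ggrp X (grev X x))"
  by (rule hom_in_carrier[OF gog_br])

lemma grel_ok: assumes "is_gog X" "grel X l r" "ok X v l u" shows "ok X v r u"
  using assms(2,3)
proof (induction rule: grel.induct)
  case (mult w g h)
  have "group (ggrp X w)" using gog_group[OF assms(1) gr_verts_el[OF mult(1)]] .
  then have "g \<otimes>\<^bsub>ggrp X w\<^esub> h \<in> carrier (ggrp X w)"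
    using mult(2,3) by (simp add: group.is_monoid monoid.m_closed)
  with mult(4) show ?case by (simp; blast)
next
  case (unit w)
  then show ?case by (simp; blast)
next
  case (inv x)
  have g: "is_graph X" using assms(1) gog_graph by blast
  from inv(2) have "ok X (gtgt X (grev X x)) [] u" "gsrc X x = v" by auto
  moreover have "gtgt X (grev X x) = gsrc X x" using gr_tgt_rev[OF g gr_edges_el[OF inv(1)]] .
  ultimately show ?case by (simp; blast)
next
  case (edge x g)
  have g: "is_graph X" using assms(1) gog_graph by blast
  have xe: "x \<in> gel X" using gr_edges_el[OF edge(1)] .
  from edge(3) have t: "ok X (gtgt X x) [] u" "gsrc X x = v" by auto
  have r: "gbr X x g \<in> carrier (ggrp X (grev X x))" using gog_br_car[OF assms(1) xe edge(2)] .
  have "ghm X (grev X x) (gbr X x g) \<in> carrier (ggrp X (gsrc X (grev X x)))"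
    using gog_hm_car[OF assms(1) gr_rev_el[OF g xe] r] .
  then have "ghm X (grev X x) (gbr X x g) \<in> carrier (ggrp X (gtgt X x))" by (simp add: gtgt_def)
  with edge(1) t show ?case by (simp; blast)
qed

lemma wstep_ok: assumes "is_gog X" "wstep X v a b" "ok X v a t" shows "ok X v b t"
proof -
  have g: "is_graph X" using assms gog_graph by blast
  from assms obtain c l r w where "grel X l r" "a = c @ l @ w" "b = c @ r @ w" unfolding wstep_def by blast
  with assms(3) ok_append[OF g] obtain m m' where "ok X v c m" "ok X m l m'" "ok X m' w t" by metis
  with grel_ok[OF assms(1) \<open>grel X l r\<close>] ok_append[OF g] \<open>b = c @ r @ w\<close> show ?thesis by metis
qed

lemma wstep_ok': assumes "is_gog X" "wstep X v a b" "ok X v b t" shows "ok X v a t"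
proof -
  from assms obtain t0 where "ok X v a t0" unfolding wstep_def by blast
  with wstep_ok[OF assms(1,2)] have "ok X v b t0" by blast
  with assms(3) ok_unique have "t = t0" by metis
  with \<open>ok X v a t0\<close> show ?thesis by simp
qed

lemma weq_ok: assumes "is_gog X" "weq X v a b" "ok X v a t" shows "ok X v b t"
  using assms(2,3) unfolding weq_def
proof (induction rule: rtranclp_induct)
  case base then show ?case by simp
next
  case (step y z)
  then show ?case using wstep_ok[OF assms(1)] wstep_ok'[OF assms(1)] by blast
qed

lemma weq_refl: "weq X v a a"
  unfolding weq_def by simp

lemma weq_sym: "weq X v a b \<Longrightarrow> weq X v b a"
proof -
  have "symp (\<lambda>a b. wstep X v a b \<or> wstep X v b a)" by (auto simp: symp_def)
  then have "symp (weq X v)" unfolding weq_def by (rule symp_rtranclp)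
  then show "weq X v a b \<Longrightarrow> weq X v b a" by (rule sympD)
qed

lemma weq_trans: "weq X v a b \<Longrightarrow> weq X v b c \<Longrightarrow> weq X v a c"
  unfolding weq_def by (rule rtranclp_trans)

lemma wstep_app: assumes "is_gog X" "wstep X v a b" "ok X v a w" "ok X w s t"
  shows "wstep X v (a @ s) (b @ s)"
proof -
  have g: "is_graph X" using assms gog_graph by blast
  from assms obtain c l r d where cl: "grel X l r" "a = c @ l @ d" "b = c @ r @ d" unfolding wstep_def by blast
  moreover have "ok X v b w" using wstep_ok[OF assms(1,2,3)] .
  ultimately have "ok X v (a @ s) t" "ok X v (b @ s) t"
    using assms(3,4) ok_append[OF g] by blast+
  moreover have "a @ s = c @ l @ (d @ s)" "b @ s = c @ r @ (d @ s)" using cl by simp_all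
  ultimately show ?thesis unfolding wstep_def using \<open>grel X l r\<close> by blast
qed

lemma wstep_pre: assumes "is_gog X" "wstep X v a b" "ok X v' c v"
  shows "wstep X v' (c @ a) (c @ b)"
proof -
  have g: "is_graph X" using assms gog_graph by blast
  from assms obtain d l r e where cl: "grel X l r" "a = d @ l @ e" "b = d @ r @ e" unfolding wstep_def by blast
  moreover obtain t where "ok X v a t" using assms unfolding wstep_def by blast
  moreover have "ok X v b t" using wstep_ok[OF assms(1,2)] calculation(4) .
  ultimately have "ok X v' (c @ a) t" "ok X v' (c @ b) t"
    using assms(3) ok_append[OF g] by blast+
  moreover have "c @ a = (c @ d) @ l @ e" "c @ b = (c @ d) @ r @ e" using cl by simp_all
  ultimately show ?thesis unfolding wstep_def using \<open>grel X l r\<close> by blast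
qed

lemma weq_app: assumes "is_gog X" "weq X v a b" "ok X v a w" "ok X w s t"
  shows "weq X v (a @ s) (b @ s)"
  using assms(2,3) unfolding weq_def
proof (induction rule: rtranclp_induct)
  case base then show ?case by simp
next
  case (step y z)
  have "ok X v y w" using step weq_ok[OF assms(1)] unfolding weq_def by blast
  then have "ok X v z w" using step wstep_ok[OF assms(1)] wstep_ok'[OF assms(1)] by blast
  from step(2) have "wstep X v (y @ s) (z @ s) \<or> wstep X v (z @ s) (y @ s)"
    using wstep_app[OF assms(1) _ _ assms(4)] \<open>ok X v y w\<close> \<open>ok X v z w\<close> by blast
  with step(3)[OF step(4)] show ?case by (rule rtranclp.rtrancl_into_rtrancl)
qed

lemma weq_pre: assumes "is_gog X" "weq X v a b" "ok X v' c v"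
  shows "weq X v' (c @ a) (c @ b)"
  using assms(2) unfolding weq_def
proof (induction rule: rtranclp_induct)
  case base then show ?case by simp
next
  case (step y z)
  from step(2) have "wstep X v' (c @ y) (c @ z) \<or> wstep X v' (c @ z) (c @ y)"
    using wstep_pre[OF assms(1) _ assms(3)] by blast
  with step(3) show ?case by (rule rtranclp.rtrancl_into_rtrancl)
qed

lemma weq_grel: assumes "is_gog X" "grel X l r" "ok X v (c @ l @ d) t"
  shows "weq X v (c @ l @ d) (c @ r @ d)"
proof -
  have g: "is_graph X" using assms gog_graph by blast
  from assms(3) ok_append[OF g] obtain m m' where "ok X v c m" "ok X m l m'" "ok X m' d t" by metis
  with grel_ok[OF assms(1,2)] ok_append[OF g] have "ok X v (c @ r @ d) t" by metis
  with assms have "wstep X v (c @ l @ d) (c @ r @ d)" unfolding wstep_def by blast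
  then show ?thesis unfolding weq_def by blast
qed


lemma ok_Nil[simp]: "ok X v [] u \<longleftrightarrow> u = v \<and> v \<in> gverts X" by auto
declare ok.simps(1)[simp del]

lemma ok_single_elt: "ok X v [Elt y g] u \<longleftrightarrow> v \<in> gverts X \<and> y = v \<and> g \<in> carrier (ggrp X v) \<and> u = v"
  by auto

lemma ok_gword: assumes "is_gog X" "x \<in> gel X" shows "ok X (gsrc X x) (gword X x) (gtgt X x)"
proof -
  have g: "is_graph X" using assms gog_graph by blast
  show ?thesis
  proof (cases "gsrc X x = x")
    case True
    then have "x \<in> gverts X" using assms unfolding gverts_def by blast
    then show ?thesis using True gr_vert_tgt[OF g] unfolding gword_def by simp
  next
    case False
    then have "x \<in> gedges X" using assms unfolding gedges_def by blast
    then show ?thesis using False gr_tgt_vert[OF g assms(2)] unfolding gword_def by simp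
  qed
qed

lemma W1: assumes "is_gog Y" "ok Y d w v" "ok Y v s t"
  shows "weq Y d (w @ Elt v \<one>\<^bsub>ggrp Y v\<^esub> # s) (w @ s)"
proof -
  have g: "is_graph Y" using assms gog_graph by blast
  have v: "v \<in> gverts Y" using ok_vert[OF g assms(2)] by blast
  have "group (ggrp Y v)" using gog_group[OF assms(1) gr_verts_el[OF v]] .
  then have "\<one>\<^bsub>ggrp Y v\<^esub> \<in> carrier (ggrp Y v)" by (simp add: group.is_monoid monoid.one_closed)
  then have "ok Y v [Elt v \<one>\<^bsub>ggrp Y v\<^esub>] v" using v by simp
  then have "ok Y d (w @ [Elt v \<one>\<^bsub>ggrp Y v\<^esub>] @ s) t" using assms ok_append[OF g] by blast
  from weq_grel[OF assms(1) grel.unit[OF v] this] show ?thesis by simp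
qed

lemma W2: assumes "is_gog Y" "ok Y d w v" "ok Y v s t" "g \<in> carrier (ggrp Y v)" "h \<in> carrier (ggrp Y v)"
  shows "weq Y d (w @ Elt v g # Elt v h # s) (w @ Elt v (g \<otimes>\<^bsub>ggrp Y v\<^esub> h) # s)"
proof -
  have g: "is_graph Y" using assms gog_graph by blast
  have v: "v \<in> gverts Y" using ok_vert[OF g assms(2)] by blast
  have "ok Y v [Elt v g, Elt v h] v" using v assms by simp
  then have "ok Y d (w @ [Elt v g, Elt v h] @ s) t" using assms ok_append[OF g] by blast
  from weq_grel[OF assms(1) grel.mult[OF v assms(4,5)] this] show ?thesis by simp
qed

lemma W3: assumes "is_gog Y" "x \<in> gel Y" "ok Y d w (gsrc Y x)" "ok Y (gsrc Y x) s t"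
  shows "weq Y d (w @ gword Y x @ gword Y (grev Y x) @ s) (w @ s)"
proof -
  have g: "is_graph Y" using assms gog_graph by blast
  show ?thesis
  proof (cases "gsrc Y x = x")
    case True
    then have "x \<in> gverts Y" using assms unfolding gverts_def by blast
    then have "grev Y x = x" using gr_vert_rev[OF g] by blast
    then show ?thesis using True unfolding gword_def by (simp add: weq_refl)
  next
    case False
    then have xe: "x \<in> gedges Y" using assms unfolding gedges_def by blast
    then have re: "grev Y x \<in> gedges Y" using gr_rev_edge[OF g] by blast
    then have w: "gword Y x = [Edg x]" "gword Y (grev Y x) = [Edg (grev Y x)]"
      using xe unfolding gword_def gedges_def by auto
    have "ok Y (gsrc Y x) [Edg x, Edg (grev Y x)] (gsrc Y x)"
      using xe re gr_tgt_rev[OF g assms(2)] ok_vert[OF g assms(4)] by (simp add: gtgt_def)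
    then have "ok Y d (w @ [Edg x, Edg (grev Y x)] @ s) t" using assms ok_append[OF g] by blast
    from weq_grel[OF assms(1) grel.inv[OF xe] this] show ?thesis using w by simp
  qed
qed

lemma W4: assumes "is_gog Y" "x \<in> gel Y" "k \<in> carrier (ggrp Y x)" "ok Y d w (gsrc Y x)" "ok Y (gtgt Y x) s t"
  shows "weq Y d (w @ Elt (gsrc Y x) (ghm Y x k) # gword Y x @ s)
                 (w @ gword Y x @ Elt (gtgt Y x) (ghm Y (grev Y x) (gbr Y x k)) # s)"
proof -
  have g: "is_graph Y" using assms gog_graph by blast
  show ?thesis
  proof (cases "gsrc Y x = x")
    case True
    then have xv: "x \<in> gverts Y" using assms unfolding gverts_def by blast
    then have r: "grev Y x = x" using gr_vert_rev[OF g] by blast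
    have t: "gtgt Y x = x" using gr_vert_tgt[OF g xv] .
    have "ghm Y x k = k" "gbr Y x k = k" using gog_vid[OF assms(1) xv assms(3)] by auto
    then show ?thesis using True r t unfolding gword_def by (simp add: weq_refl)
  next
    case False
    then have xe: "x \<in> gedges Y" using assms unfolding gedges_def by blast
    then have w: "gword Y x = [Edg x]" unfolding gword_def gedges_def by auto
    have "ghm Y x k \<in> carrier (ggrp Y (gsrc Y x))" using gog_hm_car[OF assms(1,2,3)] .
    moreover have "gsrc Y x \<in> gverts Y" using gr_src_vert[OF g assms(2)] .
    ultimately have "ok Y (gsrc Y x) [Elt (gsrc Y x) (ghm Y x k), Edg x] (gtgt Y x)"
      using xe ok_vert[OF g assms(5)] by simp
    then have "ok Y d (w @ [Elt (gsrc Y x) (ghm Y x k), Edg x] @ s) t" using assms ok_append[OF g] by blast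
    from weq_grel[OF assms(1) grel.edge[OF xe assms(3)] this] show ?thesis using w by simp
  qed
qed

fun winv :: "('x,'g) gog \<Rightarrow> ('x,'g) letter list \<Rightarrow> ('x,'g) letter list" where
  "winv X [] = []"
| "winv X (Edg x # w) = winv X w @ [Edg (grev X x)]"
| "winv X (Elt v g # w) = winv X w @ [Elt v (inv\<^bsub>ggrp X v\<^esub> g)]"

lemma winv_ok: assumes "is_gog X" "ok X v w u" shows "ok X u (winv X w) v"
  using assms(2)
proof (induction w arbitrary: v)
  case Nil then show ?case by simp
next
  case (Cons l w)
  have g: "is_graph X" using assms gog_graph by blast
  show ?case
  proof (cases l)
    case (Edg x)
    with Cons.prems have x: "x \<in> gedges X" "gsrc X x = v" "ok X (gtgt X x) w u" by auto
    have r: "ok X (gtgt X x) [Edg (grev X x)] v"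
      using x gr_rev_edge[OF g] gr_tgt_rev[OF g gr_edges_el[OF x(1)]] gr_src_vert[OF g gr_edges_el[OF x(1)]]
      by (simp add: gtgt_def)
    show ?thesis using Cons.IH[OF x(3)] r Edg ok_append[OF g] by auto
  next
    case (Elt y h)
    with Cons.prems have x: "v \<in> gverts X" "y = v" "h \<in> carrier (ggrp X v)" "ok X v w u" by auto
    have "group (ggrp X v)" using gog_group[OF assms(1) gr_verts_el[OF x(1)]] .
    then have "inv\<^bsub>ggrp X v\<^esub> h \<in> carrier (ggrp X v)" using x(3) by (rule group.inv_closed)
    then have r: "ok X v [Elt v (inv\<^bsub>ggrp X v\<^esub> h)] v" using x by simp
    show ?thesis using Cons.IH[OF x(4)] r Elt x(2) ok_append[OF g] by auto
  qed
qed

lemma winv_cancel: assumes "is_gog X" "ok X v w u" "ok X d c v" "ok X v s t"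
  shows "weq X d (c @ w @ winv X w @ s) (c @ s)"
  using assms(2,3,4)
proof (induction w arbitrary: v c s)
  case Nil then show ?case by (simp add: weq_refl)
next
  case (Cons l w)
  have g: "is_graph X" using assms gog_graph by blast
  show ?case
  proof (cases l)
    case (Edg x)
    with Cons.prems have x: "x \<in> gedges X" "gsrc X x = v" "ok X (gtgt X x) w u" by auto
    have xel: "x \<in> gel X" using gr_edges_el[OF x(1)] .
    have gw: "gword X x = [Edg x]" "gword X (grev X x) = [Edg (grev X x)]"
      using x gr_rev_edge[OF g x(1)] unfolding gword_def gedges_def by auto
    have c1: "ok X d (c @ [Edg x]) (gtgt X x)" using Cons.prems(2) x ok_append[OF g] ok_vert[OF g x(3)] by auto
    have s1: "ok X (gtgt X x) (Edg (grev X x) # s) t"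
      using x gr_rev_edge[OF g] gr_tgt_rev[OF g xel] Cons.prems(3) by (simp add: gtgt_def)
    have "weq X d ((c @ [Edg x]) @ w @ winv X w @ (Edg (grev X x) # s)) ((c @ [Edg x]) @ Edg (grev X x) # s)"
      by (rule Cons.IH[OF x(3) c1 s1])
    moreover have "weq X d (c @ gword X x @ gword X (grev X x) @ s) (c @ s)"
      using W3[OF assms(1) xel] Cons.prems(2,3) x(2) by blast
    ultimately show ?thesis using Edg gw by (simp add: weq_trans)
  next
    case (Elt y h)
    with Cons.prems have x: "v \<in> gverts X" "y = v" "h \<in> carrier (ggrp X v)" "ok X v w u" by auto
    have G: "group (ggrp X v)" using gog_group[OF assms(1) gr_verts_el[OF x(1)]] .
    then have hi: "inv\<^bsub>ggrp X v\<^esub> h \<in> carrier (ggrp X v)" using x(3) by (rule group.inv_closed)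
    have c1: "ok X d (c @ [Elt v h]) v" using Cons.prems(2) x ok_append[OF g] by auto
    have s1: "ok X v (Elt v (inv\<^bsub>ggrp X v\<^esub> h) # s) t" using x hi Cons.prems(3) by simp
    have "weq X d ((c @ [Elt v h]) @ w @ winv X w @ (Elt v (inv\<^bsub>ggrp X v\<^esub> h) # s))
                   ((c @ [Elt v h]) @ Elt v (inv\<^bsub>ggrp X v\<^esub> h) # s)"
      by (rule Cons.IH[OF x(4) c1 s1])
    moreover have "weq X d (c @ Elt v h # Elt v (inv\<^bsub>ggrp X v\<^esub> h) # s)
                            (c @ Elt v (h \<otimes>\<^bsub>ggrp X v\<^esub> inv\<^bsub>ggrp X v\<^esub> h) # s)"
      using W2[OF assms(1) Cons.prems(2,3) x(3) hi] .
    moreover have "h \<otimes>\<^bsub>ggrp X v\<^esub> inv\<^bsub>ggrp X v\<^esub> h = \<one>\<^bsub>ggrp X v\<^esub>"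
      using G x(3) by (simp add: group.r_inv)
    moreover have "weq X d (c @ Elt v \<one>\<^bsub>ggrp X v\<^esub> # s) (c @ s)" using W1[OF assms(1) Cons.prems(2,3)] .
    ultimately show ?thesis using Elt x(2) by (simp add: weq_trans)
  qed
qed


definition isdec :: "('y,'g) gog \<Rightarrow> ('z,'y,'x,'b,'g,'h) gob \<Rightarrow> 'z \<Rightarrow> 'x \<Rightarrow> 'b \<Rightarrow> 'z \<Rightarrow> 'g \<Rightarrow> 'b \<Rightarrow> bool" where
  "isdec Y B z f b e g c \<longleftrightarrow> e \<in> gedges (bgr B) \<and> rho B e = f \<and> gsrc (bgr B) e = z
     \<and> g \<in> carrier (ggrp Y (lam B z)) \<and> c \<in> bset B e \<and> b = bl B z g (bm B e c)"

definition dec :: "('y,'g) gog \<Rightarrow> ('z,'y,'x,'b,'g,'h) gob \<Rightarrow> 'z \<Rightarrow> 'x \<Rightarrow> 'b \<Rightarrow> 'z \<times> 'g \<times> 'b" where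
  "dec Y B z f b = (SOME (e, g, c). isdec Y B z f b e g c)"

fun push :: "('y,'g) gog \<Rightarrow> ('z,'y,'x,'b,'g,'h) gob \<Rightarrow> ('y,'g) letter list \<Rightarrow> 'z \<Rightarrow> 'b
     \<Rightarrow> ('x,'h) letter list \<Rightarrow> ('y,'g) letter list \<times> 'z \<times> 'b" where
  "push Y B q z b [] = (q, z, b)"
| "push Y B q z b (Elt y h # p) = push Y B q z (br B z b h) p"
| "push Y B q z b (Edg f # p) = (case dec Y B z f b of (e, g, c) \<Rightarrow>
      push Y B (q @ Elt (lam B z) g # gword Y (lam B e)) (gtgt (bgr B) e)
        (bm B (grev (bgr B) e) (bb B e c)) p)"

lemma push_pre: "push Y B (c @ q) z b p = (case push Y B q z b p of (q', z', b') \<Rightarrow> (c @ q', z', b'))"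
proof (induction p arbitrary: q z b)
  case Nil then show ?case by simp
next
  case (Cons l p)
  then show ?case by (cases l) (auto split: prod.split)
qed

lemma push_append: "push Y B q z b (p1 @ p2) = (case push Y B q z b p1 of (q', z', b') \<Rightarrow> push Y B q' z' b' p2)"
proof (induction p1 arbitrary: q z b)
  case Nil then show ?case by simp
next
  case (Cons l p)
  then show ?case by (cases l) (auto split: prod.split)
qed

definition V :: "('y,'g) gog \<Rightarrow> ('z,'y,'x,'b,'g,'h) gob \<Rightarrow> 'y \<Rightarrow> ('y,'g) letter list \<times> 'z \<times> 'b \<Rightarrow> bool" where
  "V Y B d t = (case t of (q, z, b) \<Rightarrow> z \<in> gverts (bgr B) \<and> ok Y d q (lam B z) \<and> b \<in> bset B z)"

definition Rel :: "('y,'g) gog \<Rightarrow> ('z,'y,'x,'b,'g,'h) gob \<Rightarrow> 'y \<Rightarrow> ('y,'g) letter list \<times> 'z \<times> 'b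
     \<Rightarrow> ('y,'g) letter list \<times> 'z \<times> 'b \<Rightarrow> bool" where
  "Rel Y B d t t' = (case t of (q, z, b) \<Rightarrow> case t' of (q', z', b') \<Rightarrow>
      z' = z \<and> (\<exists>g\<in>carrier (ggrp Y (lam B z)). b = bl B z g b' \<and> weq Y d (q @ [Elt (lam B z) g]) q'))"

lemma V_simp: "V Y B d (q, z, b) \<longleftrightarrow> z \<in> gverts (bgr B) \<and> ok Y d q (lam B z) \<and> b \<in> bset B z"
  unfolding V_def by simp

lemma Rel_simp: "Rel Y B d (q, z, b) (q', z', b') \<longleftrightarrow>
   z' = z \<and> (\<exists>g\<in>carrier (ggrp Y (lam B z)). b = bl B z g b' \<and> weq Y d (q @ [Elt (lam B z) g]) q')"
  unfolding Rel_def by simp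

declare weq_trans[trans]

locale GB =
  fixes Y :: "('y,'g) gog" and X :: "('x,'h) gog" and B :: "('z,'y,'x,'b,'g,'h) gob"
    and dag :: 'y and st :: 'x
  assumes Yg: "is_gog Y" and Xg: "is_gog X" and Bg: "is_gob Y X B"
    and LF: "left_free_gob Y X B" and dagv: "dag \<in> gverts Y" and stv: "st \<in> gverts X"
begin

lemma gY: "is_graph Y" using Yg gog_graph by blast
lemma gX: "is_graph X" using Xg gog_graph by blast
lemma gB: "is_graph (bgr B)" using Bg unfolding is_gob_def by blast
lemma lamM: "graph_morphism (bgr B) Y (lam B)" using Bg unfolding is_gob_def by blast
lemma rhoM: "graph_morphism (bgr B) X (rho B)" using Bg unfolding is_gob_def by blast
lemma rhoS: "simplicial (bgr B) X (rho B)" using LF unfolding left_free_gob_def left_fibrant_def by blast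

lemma bis: "z \<in> gel (bgr B) \<Longrightarrow> is_biset (ggrp Y (lam B z)) (ggrp X (rho B z)) (bset B z) (bl B z) (br B z)"
  using Bg unfolding is_gob_def by blast

lemma grpY: "z \<in> gel (bgr B) \<Longrightarrow> group (ggrp Y (lam B z))"
  using gog_group[OF Yg gm_el[OF lamM]] by blast

lemma grpX: "z \<in> gel (bgr B) \<Longrightarrow> group (ggrp X (rho B z))"
  using gog_group[OF Xg gm_el[OF rhoM]] by blast

lemma bl_closed: "z \<in> gel (bgr B) \<Longrightarrow> g \<in> carrier (ggrp Y (lam B z)) \<Longrightarrow> b \<in> bset B z \<Longrightarrow> bl B z g b \<in> bset B z"
  using bis unfolding is_biset_def by blast
lemma bl_one: "z \<in> gel (bgr B) \<Longrightarrow> b \<in> bset B z \<Longrightarrow> bl B z \<one>\<^bsub>ggrp Y (lam B z)\<^esub> b = b"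
  using bis unfolding is_biset_def by blast
lemma bl_mult: "z \<in> gel (bgr B) \<Longrightarrow> g \<in> carrier (ggrp Y (lam B z)) \<Longrightarrow> g' \<in> carrier (ggrp Y (lam B z)) \<Longrightarrow> b \<in> bset B z
   \<Longrightarrow> bl B z (g \<otimes>\<^bsub>ggrp Y (lam B z)\<^esub> g') b = bl B z g (bl B z g' b)"
  using bis unfolding is_biset_def by blast
lemma br_closed: "z \<in> gel (bgr B) \<Longrightarrow> h \<in> carrier (ggrp X (rho B z)) \<Longrightarrow> b \<in> bset B z \<Longrightarrow> br B z b h \<in> bset B z"
  using bis unfolding is_biset_def by blast
lemma br_one: "z \<in> gel (bgr B) \<Longrightarrow> b \<in> bset B z \<Longrightarrow> br B z b \<one>\<^bsub>ggrp X (rho B z)\<^esub> = b"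
  using bis unfolding is_biset_def by blast
lemma br_mult: "z \<in> gel (bgr B) \<Longrightarrow> h \<in> carrier (ggrp X (rho B z)) \<Longrightarrow> h' \<in> carrier (ggrp X (rho B z)) \<Longrightarrow> b \<in> bset B z
   \<Longrightarrow> br B z b (h \<otimes>\<^bsub>ggrp X (rho B z)\<^esub> h') = br B z (br B z b h) h'"
  using bis unfolding is_biset_def by blast

lemma bm_closed: "z \<in> gel (bgr B) \<Longrightarrow> b \<in> bset B z \<Longrightarrow> bm B z b \<in> bset B (gsrc (bgr B) z)"
  using Bg unfolding is_gob_def by blast
lemma bb_closed: "z \<in> gel (bgr B) \<Longrightarrow> b \<in> bset B z \<Longrightarrow> bb B z b \<in> bset B (grev (bgr B) z)"
  using Bg unfolding is_gob_def by blast
lemma bb_bb: "z \<in> gel (bgr B) \<Longrightarrow> b \<in> bset B z \<Longrightarrow> bb B (grev (bgr B) z) (bb B z b) = b"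
  using Bg unfolding is_gob_def by blast
lemma bm_bl: "z \<in> gel (bgr B) \<Longrightarrow> g \<in> carrier (ggrp Y (lam B z)) \<Longrightarrow> b \<in> bset B z \<Longrightarrow>
   bm B z (bl B z g b) = bl B (gsrc (bgr B) z) (ghm Y (lam B z) g) (bm B z b)"
  using Bg unfolding is_gob_def by blast
lemma bb_bl: "z \<in> gel (bgr B) \<Longrightarrow> g \<in> carrier (ggrp Y (lam B z)) \<Longrightarrow> b \<in> bset B z \<Longrightarrow>
   bb B z (bl B z g b) = bl B (grev (bgr B) z) (gbr Y (lam B z) g) (bb B z b)"
  using Bg unfolding is_gob_def by blast
lemma bm_br: "z \<in> gel (bgr B) \<Longrightarrow> h \<in> carrier (ggrp X (rho B z)) \<Longrightarrow> b \<in> bset B z \<Longrightarrow>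
   bm B z (br B z b h) = br B (gsrc (bgr B) z) (bm B z b) (ghm X (rho B z) h)"
  using Bg unfolding is_gob_def by blast
lemma bb_br: "z \<in> gel (bgr B) \<Longrightarrow> h \<in> carrier (ggrp X (rho B z)) \<Longrightarrow> b \<in> bset B z \<Longrightarrow>
   bb B z (br B z b h) = br B (grev (bgr B) z) (bb B z b) (gbr X (rho B z) h)"
  using Bg unfolding is_gob_def by blast
lemma bm_vert: "v \<in> gverts (bgr B) \<Longrightarrow> b \<in> bset B v \<Longrightarrow> bm B v b = b"
  using Bg unfolding is_gob_def by blast

lemma lfree: "z \<in> gel (bgr B) \<Longrightarrow> g \<in> carrier (ggrp Y (lam B z)) \<Longrightarrow> b \<in> bset B z \<Longrightarrow>
   bl B z g b = b \<Longrightarrow> g = \<one>\<^bsub>ggrp Y (lam B z)\<^esub>"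
  using LF unfolding left_free_gob_def by blast

lemma fib_ex: assumes "v \<in> gverts (bgr B)" "f \<in> gedges X" "gsrc X f = rho B v" "c \<in> bset B v"
  shows "\<exists>e g b. isdec Y B v f c e g b"
proof -
  have "\<forall>v\<in>gverts (bgr B). \<forall>f\<in>gedges X. gsrc X f = rho B v \<longrightarrow>
      (let Es = {e\<in>gedges (bgr B). rho B e = f \<and> gsrc (bgr B) e = v};
           Gv = ggrp Y (lam B v) in
       (\<forall>c\<in>bset B v. \<exists>e\<in>Es. \<exists>g\<in>carrier Gv. \<exists>b\<in>bset B e. c = bl B v g (bm B e b)))"
    using LF unfolding left_free_gob_def left_fibrant_def Let_def by blast
  with assms show ?thesis unfolding isdec_def Let_def by blast
qed

lemma fib_uniq: assumes "v \<in> gverts (bgr B)" "isdec Y B v f c e g b" "isdec Y B v f c e' g' b'"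
  shows "e = e' \<and> (\<exists>k\<in>carrier (ggrp Y (lam B e)).
                      g = g' \<otimes>\<^bsub>ggrp Y (lam B v)\<^esub> ghm Y (lam B e) k \<and> b' = bl B e k b)"
proof -
  have e: "e \<in> gedges (bgr B)" "rho B e = f" "gsrc (bgr B) e = v" using assms(2) unfolding isdec_def by auto
  have fe: "f \<in> gedges X" "gsrc X f = rho B v"
    using e rhoS gm_src[OF rhoM gr_edges_el[OF e(1)]] unfolding simplicial_def by auto
  have "\<forall>v\<in>gverts (bgr B). \<forall>f\<in>gedges X. gsrc X f = rho B v \<longrightarrow>
      (let Es = {e\<in>gedges (bgr B). rho B e = f \<and> gsrc (bgr B) e = v};
           Gv = ggrp Y (lam B v) in
       (\<forall>e\<in>Es. \<forall>e'\<in>Es. \<forall>g\<in>carrier Gv. \<forall>g'\<in>carrier Gv. \<forall>b\<in>bset B e. \<forall>b'\<in>bset B e'.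
          bl B v g (bm B e b) = bl B v g' (bm B e' b') \<longrightarrow>
          e = e' \<and> (\<exists>k\<in>carrier (ggrp Y (lam B e)).
                      g = g' \<otimes>\<^bsub>Gv\<^esub> ghm Y (lam B e) k \<and> b' = bl B e k b)))"
    using LF unfolding left_free_gob_def left_fibrant_def Let_def by blast
  then have H: "\<And>e e' g g' b b'. e \<in> gedges (bgr B) \<Longrightarrow> rho B e = f \<Longrightarrow> gsrc (bgr B) e = v \<Longrightarrow>
      e' \<in> gedges (bgr B) \<Longrightarrow> rho B e' = f \<Longrightarrow> gsrc (bgr B) e' = v \<Longrightarrow>
      g \<in> carrier (ggrp Y (lam B v)) \<Longrightarrow> g' \<in> carrier (ggrp Y (lam B v)) \<Longrightarrow> b \<in> bset B e \<Longrightarrow> b' \<in> bset B e' \<Longrightarrow>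
      bl B v g (bm B e b) = bl B v g' (bm B e' b') \<Longrightarrow>
          e = e' \<and> (\<exists>k\<in>carrier (ggrp Y (lam B e)).
                      g = g' \<otimes>\<^bsub>ggrp Y (lam B v)\<^esub> ghm Y (lam B e) k \<and> b' = bl B e k b)"
    using assms(1) fe unfolding Let_def by blast
  show ?thesis
    apply (rule H)
    using assms(2,3) unfolding isdec_def by auto
qed

lemma dec_isdec: assumes "v \<in> gverts (bgr B)" "f \<in> gedges X" "gsrc X f = rho B v" "c \<in> bset B v"
  shows "case dec Y B v f c of (e, g, b) \<Rightarrow> isdec Y B v f c e g b"
proof -
  from fib_ex[OF assms] obtain e g b where "isdec Y B v f c e g b" by blast
  then have "(\<lambda>(e, g, b). isdec Y B v f c e g b) (e, g, b)" by simp
  then have "(\<lambda>(e, g, b). isdec Y B v f c e g b) (SOME (e, g, b). isdec Y B v f c e g b)"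
    by (rule someI)
  then show ?thesis unfolding dec_def .
qed


abbreviation "Vt \<equiv> V Y B dag"
abbreviation "Rt \<equiv> Rel Y B dag"

lemma isdec_valid: assumes "z \<in> gverts (bgr B)" "ok Y dag q (lam B z)" "isdec Y B z f b e g c"
  shows "Vt (q @ Elt (lam B z) g # gword Y (lam B e), gtgt (bgr B) e, bm B (grev (bgr B) e) (bb B e c))
     \<and> rho B (gtgt (bgr B) e) = gtgt X f"
proof -
  from assms(3) have e: "e \<in> gedges (bgr B)" "rho B e = f" "gsrc (bgr B) e = z"
     "g \<in> carrier (ggrp Y (lam B z))" "c \<in> bset B e" unfolding isdec_def by auto
  have eel: "e \<in> gel (bgr B)" using gr_edges_el[OF e(1)] .
  have tv: "gtgt (bgr B) e \<in> gverts (bgr B)" using gr_tgt_vert[OF gB eel] .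
  have lzv: "lam B z \<in> gverts Y" using gm_vert[OF lamM gB assms(1)] .
  have le: "lam B e \<in> gel Y" using gm_el[OF lamM eel] .
  have o1: "ok Y (lam B z) [Elt (lam B z) g] (lam B z)" using lzv e(4) by simp
  have o2: "ok Y (lam B z) (gword Y (lam B e)) (lam B (gtgt (bgr B) e))"
    using ok_gword[OF Yg le] gm_src[OF lamM eel] gm_tgt[OF lamM gB eel] e(3) by simp
  have "ok Y dag (q @ [Elt (lam B z) g] @ gword Y (lam B e)) (lam B (gtgt (bgr B) e))"
    using assms(2) o1 o2 ok_append[OF gY] by blast
  moreover have "bm B (grev (bgr B) e) (bb B e c) \<in> bset B (gtgt (bgr B) e)"
    using bm_closed[OF gr_rev_el[OF gB eel] bb_closed[OF eel e(5)]] unfolding gtgt_def .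
  moreover have "rho B (gtgt (bgr B) e) = gtgt X f" using gm_tgt[OF rhoM gB eel] e(2) by simp
  ultimately show ?thesis using tv by (simp add: V_simp)
qed

lemma push_valid: "Vt (q, z, b) \<Longrightarrow> ok X (rho B z) p u \<Longrightarrow>
   (case push Y B q z b p of (q', z', b') \<Rightarrow> Vt (q', z', b') \<and> rho B z' = u)"
proof (induction p arbitrary: q z b)
  case Nil then show ?case by simp
next
  case (Cons l p)
  have zv: "z \<in> gverts (bgr B)" "ok Y dag q (lam B z)" "b \<in> bset B z" using Cons.prems(1) by (auto simp: V_simp)
  show ?case
  proof (cases l)
    case (Edg f)
    with Cons.prems(2) have f: "f \<in> gedges X" "gsrc X f = rho B z" "ok X (gtgt X f) p u" by auto
    obtain e g c where d: "dec Y B z f b = (e, g, c)" by (cases "dec Y B z f b") auto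
    have "isdec Y B z f b e g c" using dec_isdec[OF zv(1) f(1,2) zv(3)] d by simp
    from isdec_valid[OF zv(1,2) this] have
      "Vt (q @ Elt (lam B z) g # gword Y (lam B e), gtgt (bgr B) e, bm B (grev (bgr B) e) (bb B e c))"
      "rho B (gtgt (bgr B) e) = gtgt X f" by auto
    from Cons.IH[OF this(1)] this(2) f(3) show ?thesis using Edg d by simp
  next
    case (Elt y h)
    with Cons.prems(2) have h: "y = rho B z" "h \<in> carrier (ggrp X (rho B z))" "ok X (rho B z) p u" by auto
    have "br B z b h \<in> bset B z" using br_closed[OF gr_verts_el[OF zv(1)] h(2) zv(3)] .
    then have "Vt (q, z, br B z b h)" using zv by (simp add: V_simp)
    from Cons.IH[OF this h(3)] show ?thesis using Elt by simp
  qed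
qed

lemma Rel_refl: assumes "Vt (q, z, b)" shows "Rt (q, z, b) (q, z, b)"
proof -
  from assms have zv: "z \<in> gverts (bgr B)" "ok Y dag q (lam B z)" "b \<in> bset B z" by (auto simp: V_simp)
  have G: "group (ggrp Y (lam B z))" using grpY[OF gr_verts_el[OF zv(1)]] .
  have "weq Y dag (q @ [Elt (lam B z) \<one>\<^bsub>ggrp Y (lam B z)\<^esub>]) q"
    using W1[OF Yg zv(2), of "[]"] gm_vert[OF lamM gB zv(1)] by simp
  moreover have "b = bl B z \<one>\<^bsub>ggrp Y (lam B z)\<^esub> b" using bl_one[OF gr_verts_el[OF zv(1)] zv(3)] by simp
  ultimately show ?thesis using G by (auto simp: Rel_simp group.is_monoid monoid.one_closed)
qed

lemma Rel_weq: assumes "Vt (q, z, b)" "weq Y dag q q'" shows "Rt (q, z, b) (q', z, b)"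
proof -
  from Rel_refl[OF assms(1)] obtain g where "g \<in> carrier (ggrp Y (lam B z))" "b = bl B z g b"
     "weq Y dag (q @ [Elt (lam B z) g]) q" by (auto simp: Rel_simp)
  moreover from this(3) assms(2) have "weq Y dag (q @ [Elt (lam B z) g]) q'" by (rule weq_trans)
  ultimately show ?thesis unfolding Rel_simp by blast
qed

lemma Rel_sym: assumes "Vt (q, z, b)" "Vt (q', z', b')" "Rt (q, z, b) (q', z', b')"
  shows "Rt (q', z', b') (q, z, b)"
proof -
  from assms have zv: "z \<in> gverts (bgr B)" "ok Y dag q (lam B z)" "b \<in> bset B z"
    "ok Y dag q' (lam B z)" "b' \<in> bset B z" "z' = z" by (auto simp: V_simp Rel_simp)
  from assms(3) obtain g where g: "g \<in> carrier (ggrp Y (lam B z))" "b = bl B z g b'"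
     "weq Y dag (q @ [Elt (lam B z) g]) q'" by (auto simp: Rel_simp)
  have zel: "z \<in> gel (bgr B)" using gr_verts_el[OF zv(1)] .
  have G: "group (ggrp Y (lam B z))" using grpY[OF zel] .
  let ?i = "inv\<^bsub>ggrp Y (lam B z)\<^esub> g"
  have ig: "?i \<in> carrier (ggrp Y (lam B z))" using G g(1) by (simp add: group.inv_closed)
  have "bl B z ?i b = bl B z (?i \<otimes>\<^bsub>ggrp Y (lam B z)\<^esub> g) b'"
    using g(2) bl_mult[OF zel ig g(1) zv(5)] by simp
  also have "\<dots> = b'" using G g(1) bl_one[OF zel zv(5)] by (simp add: group.l_inv)
  finally have b1: "b' = bl B z ?i b" by simp
  have lzv: "lam B z \<in> gverts Y" using gm_vert[OF lamM gB zv(1)] .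
  have o1: "ok Y (lam B z) [Elt (lam B z) ?i] (lam B z)" using lzv ig by simp
  have o2: "ok Y (lam B z) [Elt (lam B z) g] (lam B z)" using lzv g(1) by simp
  have "weq Y dag (q' @ [Elt (lam B z) ?i]) ((q @ [Elt (lam B z) g]) @ [Elt (lam B z) ?i])"
    using weq_app[OF Yg weq_sym[OF g(3)] zv(4) o1] .
  also have "weq Y dag \<dots> (q @ [Elt (lam B z) (g \<otimes>\<^bsub>ggrp Y (lam B z)\<^esub> ?i)])"
    using W2[OF Yg zv(2), of "[]" _ g ?i] g(1) ig lzv by simp
  also have "g \<otimes>\<^bsub>ggrp Y (lam B z)\<^esub> ?i = \<one>\<^bsub>ggrp Y (lam B z)\<^esub>" using G g(1) by (simp add: group.r_inv)
  also have "weq Y dag (q @ [Elt (lam B z) \<one>\<^bsub>ggrp Y (lam B z)\<^esub>]) q"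
    using W1[OF Yg zv(2), of "[]"] lzv by simp
  finally show ?thesis using b1 ig zv(6) by (auto simp: Rel_simp)
qed

lemma bl_br: "z \<in> gel (bgr B) \<Longrightarrow> g \<in> carrier (ggrp Y (lam B z)) \<Longrightarrow> h \<in> carrier (ggrp X (rho B z)) \<Longrightarrow> b \<in> bset B z
   \<Longrightarrow> bl B z g (br B z b h) = br B z (bl B z g b) h"
  using bis unfolding is_biset_def by blast

lemma Rel_trans: assumes "Vt (q, z, b)" "Vt (q', z', b')" "Vt (q'', z'', b'')"
  "Rt (q, z, b) (q', z', b')" "Rt (q', z', b') (q'', z'', b'')"
  shows "Rt (q, z, b) (q'', z'', b'')"
proof -
  from assms have zv: "z \<in> gverts (bgr B)" "ok Y dag q (lam B z)" "b \<in> bset B z"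
    "ok Y dag q' (lam B z)" "b' \<in> bset B z" "z' = z" "z'' = z" "b'' \<in> bset B z" by (auto simp: V_simp Rel_simp)
  from assms(4) obtain g where g: "g \<in> carrier (ggrp Y (lam B z))" "b = bl B z g b'"
     "weq Y dag (q @ [Elt (lam B z) g]) q'" by (auto simp: Rel_simp)
  from assms(5) zv(6) obtain h where h: "h \<in> carrier (ggrp Y (lam B z))" "b' = bl B z h b''"
     "weq Y dag (q' @ [Elt (lam B z) h]) q''" by (auto simp: Rel_simp)
  have zel: "z \<in> gel (bgr B)" using gr_verts_el[OF zv(1)] .
  have G: "group (ggrp Y (lam B z))" using grpY[OF zel] .
  have gh: "g \<otimes>\<^bsub>ggrp Y (lam B z)\<^esub> h \<in> carrier (ggrp Y (lam B z))" using G g(1) h(1)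
    by (simp add: group.is_monoid monoid.m_closed)
  have b: "b = bl B z (g \<otimes>\<^bsub>ggrp Y (lam B z)\<^esub> h) b''" using g(2) h(2) bl_mult[OF zel g(1) h(1) zv(8)] by simp
  have lzv: "lam B z \<in> gverts Y" using gm_vert[OF lamM gB zv(1)] .
  have o1: "ok Y (lam B z) [Elt (lam B z) h] (lam B z)" using lzv h(1) by simp
  have "weq Y dag (q @ [Elt (lam B z) (g \<otimes>\<^bsub>ggrp Y (lam B z)\<^esub> h)]) (q @ [Elt (lam B z) g, Elt (lam B z) h])"
    using weq_sym[OF W2[OF Yg zv(2), of "[]" _ g h]] g(1) h(1) lzv by simp
  also have "weq Y dag \<dots> (q' @ [Elt (lam B z) h])"
    using weq_app[OF Yg g(3) _ o1] zv(2) lzv g(1) ok_append[OF gY] by simp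
  also have "weq Y dag \<dots> q''" by (rule h(3))
  finally show ?thesis using b gh zv(7) by (auto simp: Rel_simp)
qed

lemma D0: assumes "z \<in> gverts (bgr B)" "ok Y dag q (lam B z)"
  "isdec Y B z f b e1 g1 c1" "isdec Y B z f b e2 g2 c2"
  shows "e1 = e2 \<and> Rt (q @ Elt (lam B z) g1 # gword Y (lam B e1), gtgt (bgr B) e1, bm B (grev (bgr B) e1) (bb B e1 c1))
                     (q @ Elt (lam B z) g2 # gword Y (lam B e2), gtgt (bgr B) e2, bm B (grev (bgr B) e2) (bb B e2 c2))"
proof -
  from fib_uniq[OF assms(1,3,4)] obtain k where k: "e1 = e2" "k \<in> carrier (ggrp Y (lam B e1))"
     "g1 = g2 \<otimes>\<^bsub>ggrp Y (lam B z)\<^esub> ghm Y (lam B e1) k" "c2 = bl B e1 k c1" by blast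
  define e where "e = e1"
  from assms(3,4) have e: "e \<in> gedges (bgr B)" "gsrc (bgr B) e = z"
     "g1 \<in> carrier (ggrp Y (lam B z))" "c1 \<in> bset B e" "g2 \<in> carrier (ggrp Y (lam B z))"
     unfolding isdec_def e_def by auto
  have eel: "e \<in> gel (bgr B)" using gr_edges_el[OF e(1)] .
  have rel: "grev (bgr B) e \<in> gel (bgr B)" using gr_rev_el[OF gB eel] .
  have le: "lam B e \<in> gel Y" using gm_el[OF lamM eel] .
  have lre: "lam B (grev (bgr B) e) = grev Y (lam B e)" using gm_rev[OF lamM eel] .
  have k2: "k \<in> carrier (ggrp Y (lam B e))" using k(2) e_def by simp
  have kb: "gbr Y (lam B e) k \<in> carrier (ggrp Y (lam B (grev (bgr B) e)))"
    using gog_br_car[OF Yg le k2] lre by simp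
  let ?kap = "ghm Y (grev Y (lam B e)) (gbr Y (lam B e) k)"
  have tgtl: "gsrc Y (grev Y (lam B e)) = lam B (gtgt (bgr B) e)"
    using gm_tgt[OF lamM gB eel] unfolding gtgt_def by simp
  have kap: "?kap \<in> carrier (ggrp Y (lam B (gtgt (bgr B) e)))"
    using gog_hm_car[OF Yg gr_rev_el[OF gY le]] kb lre tgtl by simp
  have bbc: "bb B e c1 \<in> bset B (grev (bgr B) e)" using bb_closed[OF eel e(4)] .
  have c2p: "bm B (grev (bgr B) e) (bb B e c2) = bl B (gtgt (bgr B) e) ?kap (bm B (grev (bgr B) e) (bb B e c1))"
    using k(4) bb_bl[OF eel k2 e(4)] bm_bl[OF rel kb bbc] lre unfolding e_def gtgt_def by simp
  have V1: "Vt (q @ Elt (lam B z) g1 # gword Y (lam B e), gtgt (bgr B) e, bm B (grev (bgr B) e) (bb B e c1))"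
    using isdec_valid[OF assms(1,2,3)] e_def by simp
  have V2: "Vt (q @ Elt (lam B z) g2 # gword Y (lam B e), gtgt (bgr B) e, bm B (grev (bgr B) e) (bb B e c2))"
    using isdec_valid[OF assms(1,2,4)] e_def k(1) by simp
  have lzv: "lam B z \<in> gverts Y" using gm_vert[OF lamM gB assms(1)] .
  have srcl: "gsrc Y (lam B e) = lam B z" using gm_src[OF lamM eel] e(2) by simp
  have tl: "gtgt Y (lam B e) = lam B (gtgt (bgr B) e)" using gm_tgt[OF lamM gB eel] by simp
  have ow: "ok Y dag (q @ [Elt (lam B z) g2]) (lam B z)" using assms(2) e(5) lzv ok_append[OF gY] by simp
  have og: "ok Y (lam B z) (gword Y (lam B e)) (lam B (gtgt (bgr B) e))"
    using ok_gword[OF Yg le] srcl tl by simp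
  have hk: "ghm Y (lam B e) k \<in> carrier (ggrp Y (lam B z))" using gog_hm_car[OF Yg le k2] srcl by simp
  have tv: "lam B (gtgt (bgr B) e) \<in> gverts Y" using gm_vert[OF lamM gB gr_tgt_vert[OF gB eel]] .
  have "weq Y dag (q @ Elt (lam B z) g2 # gword Y (lam B e) @ [Elt (lam B (gtgt (bgr B) e)) ?kap])
                  (q @ Elt (lam B z) g2 # Elt (lam B z) (ghm Y (lam B e) k) # gword Y (lam B e))"
    using weq_sym[OF W4[OF Yg le k2, of dag "q @ [Elt (lam B z) g2]" "[]"]] ow srcl tl tv by simp
  also have "weq Y dag \<dots> (q @ Elt (lam B z) g1 # gword Y (lam B e))"
    using W2[OF Yg assms(2) og e(5) hk] k(3) e_def by simp
  finally have W: "weq Y dag ((q @ Elt (lam B z) g2 # gword Y (lam B e)) @ [Elt (lam B (gtgt (bgr B) e)) ?kap])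
                  (q @ Elt (lam B z) g1 # gword Y (lam B e))" by simp
  have "Rt (q @ Elt (lam B z) g2 # gword Y (lam B e), gtgt (bgr B) e, bm B (grev (bgr B) e) (bb B e c2))
           (q @ Elt (lam B z) g1 # gword Y (lam B e), gtgt (bgr B) e, bm B (grev (bgr B) e) (bb B e c1))"
    unfolding Rel_simp using kap c2p W by blast
  from Rel_sym[OF V2 V1 this] show ?thesis using k(1) e_def by simp
qed


lemma push_Rel: "Vt (q1, z, b1) \<Longrightarrow> Vt (q2, z, b2) \<Longrightarrow> Rt (q1, z, b1) (q2, z, b2) \<Longrightarrow> ok X (rho B z) p u \<Longrightarrow>
   Rt (push Y B q1 z b1 p) (push Y B q2 z b2 p)"
proof (induction p arbitrary: q1 q2 z b1 b2)
  case Nil then show ?case by simp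
next
  case (Cons l p)
  have zv: "z \<in> gverts (bgr B)" "ok Y dag q1 (lam B z)" "b1 \<in> bset B z" "ok Y dag q2 (lam B z)" "b2 \<in> bset B z"
    using Cons.prems(1,2) by (auto simp: V_simp)
  have zel: "z \<in> gel (bgr B)" using gr_verts_el[OF zv(1)] .
  from Cons.prems(3) obtain g where g: "g \<in> carrier (ggrp Y (lam B z))" "b1 = bl B z g b2"
     "weq Y dag (q1 @ [Elt (lam B z) g]) q2" by (auto simp: Rel_simp)
  have G: "group (ggrp Y (lam B z))" using grpY[OF zel] .
  show ?case
  proof (cases l)
    case (Elt y h)
    with Cons.prems(4) have h: "y = rho B z" "h \<in> carrier (ggrp X (rho B z))" "ok X (rho B z) p u" by auto
    have b1: "br B z b1 h \<in> bset B z" "br B z b2 h \<in> bset B z"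
      using br_closed[OF zel h(2)] zv by auto
    have "br B z b1 h = bl B z g (br B z b2 h)" using g(2) bl_br[OF zel g(1) h(2) zv(5)] by simp
    then have "Rt (q1, z, br B z b1 h) (q2, z, br B z b2 h)" using g unfolding Rel_simp by blast
    moreover have "Vt (q1, z, br B z b1 h)" "Vt (q2, z, br B z b2 h)" using zv b1 by (auto simp: V_simp)
    ultimately show ?thesis using Cons.IH h(3) Elt by simp
  next
    case (Edg f)
    with Cons.prems(4) have f: "f \<in> gedges X" "gsrc X f = rho B z" "ok X (gtgt X f) p u" by auto
    obtain e1 g1 c1 where d1: "dec Y B z f b1 = (e1, g1, c1)" by (cases "dec Y B z f b1") auto
    obtain e2 g2 c2 where d2: "dec Y B z f b2 = (e2, g2, c2)" by (cases "dec Y B z f b2") auto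
    have i1: "isdec Y B z f b1 e1 g1 c1" using dec_isdec[OF zv(1) f(1,2) zv(3)] d1 by simp
    have i2: "isdec Y B z f b2 e2 g2 c2" using dec_isdec[OF zv(1) f(1,2) zv(5)] d2 by simp
    from i2 have e2: "e2 \<in> gedges (bgr B)" "gsrc (bgr B) e2 = z" "g2 \<in> carrier (ggrp Y (lam B z))"
      "c2 \<in> bset B e2" "b2 = bl B z g2 (bm B e2 c2)" "rho B e2 = f" unfolding isdec_def by auto
    have gg: "g \<otimes>\<^bsub>ggrp Y (lam B z)\<^esub> g2 \<in> carrier (ggrp Y (lam B z))" using G g(1) e2(3)
      by (simp add: group.is_monoid monoid.m_closed)
    have bmc: "bm B e2 c2 \<in> bset B z" using bm_closed[OF gr_edges_el[OF e2(1)] e2(4)] e2(2) by simp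
    have i3: "isdec Y B z f b1 e2 (g \<otimes>\<^bsub>ggrp Y (lam B z)\<^esub> g2) c2"
      using e2 gg g(2) bl_mult[OF zel g(1) e2(3) bmc] unfolding isdec_def by simp
    from D0[OF zv(1,2) i1 i3] have e12: "e1 = e2" and
      R1: "Rt (q1 @ Elt (lam B z) g1 # gword Y (lam B e1), gtgt (bgr B) e1, bm B (grev (bgr B) e1) (bb B e1 c1))
              (q1 @ Elt (lam B z) (g \<otimes>\<^bsub>ggrp Y (lam B z)\<^esub> g2) # gword Y (lam B e2), gtgt (bgr B) e2,
               bm B (grev (bgr B) e2) (bb B e2 c2))" by auto
    have V1: "Vt (q1 @ Elt (lam B z) g1 # gword Y (lam B e1), gtgt (bgr B) e1, bm B (grev (bgr B) e1) (bb B e1 c1))"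
      and rt: "rho B (gtgt (bgr B) e1) = gtgt X f"
      using isdec_valid[OF zv(1,2) i1] by auto
    have V3: "Vt (q1 @ Elt (lam B z) (g \<otimes>\<^bsub>ggrp Y (lam B z)\<^esub> g2) # gword Y (lam B e2), gtgt (bgr B) e2,
               bm B (grev (bgr B) e2) (bb B e2 c2))"
      using isdec_valid[OF zv(1,2) i3] by auto
    have V2: "Vt (q2 @ Elt (lam B z) g2 # gword Y (lam B e2), gtgt (bgr B) e2, bm B (grev (bgr B) e2) (bb B e2 c2))"
      using isdec_valid[OF zv(1,4) i2] by auto
    have e2el: "e2 \<in> gel (bgr B)" using gr_edges_el[OF e2(1)] .
    have lzv: "lam B z \<in> gverts Y" using gm_vert[OF lamM gB zv(1)] .
    have og: "ok Y (lam B z) (Elt (lam B z) g2 # gword Y (lam B e2)) (lam B (gtgt (bgr B) e2))"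
      using ok_gword[OF Yg gm_el[OF lamM e2el]] gm_src[OF lamM e2el] gm_tgt[OF lamM gB e2el] e2(2,3) lzv
      by simp
    have og2: "ok Y (lam B z) (gword Y (lam B e2)) (lam B (gtgt (bgr B) e2))"
      using og by simp
    have "weq Y dag (q1 @ Elt (lam B z) (g \<otimes>\<^bsub>ggrp Y (lam B z)\<^esub> g2) # gword Y (lam B e2))
                    (q1 @ Elt (lam B z) g # Elt (lam B z) g2 # gword Y (lam B e2))"
      using weq_sym[OF W2[OF Yg zv(2) og2 g(1) e2(3)]] by simp
    also have "weq Y dag \<dots> (q2 @ Elt (lam B z) g2 # gword Y (lam B e2))"
      using weq_app[OF Yg g(3) _ og] zv(2) lzv g(1) ok_append[OF gY] by simp
    finally have "Rt (q1 @ Elt (lam B z) (g \<otimes>\<^bsub>ggrp Y (lam B z)\<^esub> g2) # gword Y (lam B e2), gtgt (bgr B) e2,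
               bm B (grev (bgr B) e2) (bb B e2 c2))
              (q2 @ Elt (lam B z) g2 # gword Y (lam B e2), gtgt (bgr B) e2, bm B (grev (bgr B) e2) (bb B e2 c2))"
      using Rel_weq[OF V3] by blast
    from Rel_trans[OF V1 V3 V2 R1 this] have R: "Rt (q1 @ Elt (lam B z) g1 # gword Y (lam B e1), gtgt (bgr B) e1, bm B (grev (bgr B) e1) (bb B e1 c1))
              (q2 @ Elt (lam B z) g2 # gword Y (lam B e2), gtgt (bgr B) e2, bm B (grev (bgr B) e2) (bb B e2 c2))" .
    have V1': "Vt (q1 @ Elt (lam B z) g1 # gword Y (lam B e2), gtgt (bgr B) e2, bm B (grev (bgr B) e2) (bb B e2 c1))"
      using V1 e12 by simp
    have R': "Rt (q1 @ Elt (lam B z) g1 # gword Y (lam B e2), gtgt (bgr B) e2, bm B (grev (bgr B) e2) (bb B e2 c1))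
              (q2 @ Elt (lam B z) g2 # gword Y (lam B e2), gtgt (bgr B) e2, bm B (grev (bgr B) e2) (bb B e2 c2))"
      using R e12 by simp
    have "ok X (rho B (gtgt (bgr B) e2)) p u" using rt e12 f(3) by simp
    from Cons.IH[OF V1' V2 R' this] show ?thesis using e12 Edg d1 d2 by simp
  qed
qed

lemma Dany: assumes "Vt (q, z, b)" "ok X (rho B z) (Edg f # p) u" "isdec Y B z f b e g c"
  shows "Rt (push Y B q z b (Edg f # p))
            (push Y B (q @ Elt (lam B z) g # gword Y (lam B e)) (gtgt (bgr B) e) (bm B (grev (bgr B) e) (bb B e c)) p)"
proof -
  have zv: "z \<in> gverts (bgr B)" "ok Y dag q (lam B z)" "b \<in> bset B z" using assms(1) by (auto simp: V_simp)
  from assms(2) have f: "f \<in> gedges X" "gsrc X f = rho B z" "ok X (gtgt X f) p u" by auto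
  obtain e0 g0 c0 where d: "dec Y B z f b = (e0, g0, c0)" by (cases "dec Y B z f b") auto
  have i0: "isdec Y B z f b e0 g0 c0" using dec_isdec[OF zv(1) f(1,2) zv(3)] d by simp
  from D0[OF zv(1,2) i0 assms(3)] have "e0 = e" and
    R: "Rt (q @ Elt (lam B z) g0 # gword Y (lam B e0), gtgt (bgr B) e0, bm B (grev (bgr B) e0) (bb B e0 c0))
           (q @ Elt (lam B z) g # gword Y (lam B e), gtgt (bgr B) e, bm B (grev (bgr B) e) (bb B e c))" by auto
  have V0: "Vt (q @ Elt (lam B z) g0 # gword Y (lam B e0), gtgt (bgr B) e0, bm B (grev (bgr B) e0) (bb B e0 c0))"
    and rt: "rho B (gtgt (bgr B) e0) = gtgt X f" using isdec_valid[OF zv(1,2) i0] by auto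
  have V1: "Vt (q @ Elt (lam B z) g # gword Y (lam B e), gtgt (bgr B) e, bm B (grev (bgr B) e) (bb B e c))"
    using isdec_valid[OF zv(1,2) assms(3)] by auto
  from push_Rel[OF V0 _ _ ] V1 R \<open>e0 = e\<close> rt f(3) d show ?thesis by simp
qed

end


context GB begin

lemma Rt_z: "Rt (q, z, b) (q', z', b') \<Longrightarrow> z' = z" by (simp add: Rel_simp)

lemma push_grel: assumes "Vt (q, z, b)" "grel X l r" "ok X (rho B z) l u"
  shows "Rt (push Y B q z b l) (push Y B q z b r)"
proof -
  have zv: "z \<in> gverts (bgr B)" "ok Y dag q (lam B z)" "b \<in> bset B z" using assms(1) by (auto simp: V_simp)
  have zel: "z \<in> gel (bgr B)" using gr_verts_el[OF zv(1)] .
  show ?thesis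
  using assms(2)
  proof (cases rule: grel.cases)
    case (mult v g h)
    with assms(3) have v: "v = rho B z" "g \<in> carrier (ggrp X (rho B z))" "h \<in> carrier (ggrp X (rho B z))" by auto
    have "br B z b (g \<otimes>\<^bsub>ggrp X (rho B z)\<^esub> h) = br B z (br B z b g) h" using br_mult[OF zel v(2,3) zv(3)] .
    moreover have "Vt (q, z, br B z b (g \<otimes>\<^bsub>ggrp X (rho B z)\<^esub> h))"
      using zv br_closed[OF zel _ zv(3)] grpX[OF zel] v by (simp add: V_simp group.is_monoid monoid.m_closed)
    ultimately show ?thesis using mult v Rel_refl by simp
  next
    case (unit v)
    with assms(3) have v: "v = rho B z" by auto
    then show ?thesis using unit br_one[OF zel zv(3)] Rel_refl[OF assms(1)] by simp
  next
    case (inv x)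
    with assms(3) have x: "x \<in> gedges X" "gsrc X x = rho B z" by auto
    have xel: "x \<in> gel X" using gr_edges_el[OF x(1)] .
    obtain e g c where d: "dec Y B z x b = (e, g, c)" by (cases "dec Y B z x b") auto
    have i: "isdec Y B z x b e g c" using dec_isdec[OF zv(1) x zv(3)] d by simp
    from i have e: "e \<in> gedges (bgr B)" "gsrc (bgr B) e = z" "g \<in> carrier (ggrp Y (lam B z))"
      "c \<in> bset B e" "b = bl B z g (bm B e c)" "rho B e = x" unfolding isdec_def by auto
    have eel: "e \<in> gel (bgr B)" using gr_edges_el[OF e(1)] .
    define T where "T = q @ Elt (lam B z) g # gword Y (lam B e)"
    define t where "t = gtgt (bgr B) e"
    define ce where "ce = grev (bgr B) e"
    have V1: "Vt (T, t, bm B ce (bb B e c))" and rt: "rho B t = gtgt X x"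
      using isdec_valid[OF zv(1,2) i] unfolding T_def t_def ce_def by auto
    have tv: "t \<in> gverts (bgr B)" using V1 by (simp add: V_simp)
    have ceel: "ce \<in> gel (bgr B)" unfolding ce_def using gr_rev_el[OF gB eel] .
    have rce: "rho B ce = grev X x" unfolding ce_def using gm_rev[OF rhoM eel] e(6) by simp
    have bbc: "bb B e c \<in> bset B ce" unfolding ce_def using bb_closed[OF eel e(4)] .
    have cp: "bm B ce (bb B e c) \<in> bset B t" using V1 by (simp add: V_simp)
    have G: "group (ggrp Y (lam B t))" using grpY[OF gr_verts_el[OF tv]] .
    have i2: "isdec Y B t (grev X x) (bm B ce (bb B e c)) ce \<one>\<^bsub>ggrp Y (lam B t)\<^esub> (bb B e c)"
      unfolding isdec_def using gr_rev_edge[OF gB e(1)] rce bbc bl_one[OF gr_verts_el[OF tv] cp] G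
      by (simp add: ce_def t_def gtgt_def group.is_monoid monoid.one_closed)
    have ok1: "ok X (rho B t) [Edg (grev X x)] (gsrc X x)"
      using rt gr_rev_edge[OF gX x(1)] gr_tgt_rev[OF gX xel] gr_src_vert[OF gX xel] by (simp add: gtgt_def)
    have pl: "push Y B q z b l = push Y B T t (bm B ce (bb B e c)) [Edg (grev X x)]"
      using inv d unfolding T_def t_def ce_def by simp
    have tce: "gtgt (bgr B) ce = z" unfolding ce_def using gr_tgt_rev[OF gB eel] e(2) by simp
    have rce2: "grev (bgr B) ce = e" unfolding ce_def using gr_revrev[OF gB eel] .
    have bbb: "bb B ce (bb B e c) = c" unfolding ce_def using bb_bb[OF eel e(4)] .
    define Q3 where "Q3 = T @ Elt (lam B t) \<one>\<^bsub>ggrp Y (lam B t)\<^esub> # gword Y (lam B ce)"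
    from Dany[OF V1 ok1 i2] have R1: "Rt (push Y B q z b l) (Q3, z, bm B e c)"
      using pl tce rce2 bbb unfolding Q3_def by simp
    have le: "lam B e \<in> gel Y" using gm_el[OF lamM eel] .
    have lce: "lam B ce = grev Y (lam B e)" unfolding ce_def using gm_rev[OF lamM eel] .
    have lzv: "lam B z \<in> gverts Y" using gm_vert[OF lamM gB zv(1)] .
    have srcl: "gsrc Y (lam B e) = lam B z" using gm_src[OF lamM eel] e(2) by simp
    have okg: "ok Y dag (q @ [Elt (lam B z) g]) (lam B z)" using zv(2) e(3) lzv ok_append[OF gY] by simp
    have okT: "ok Y dag T (lam B t)" using V1 by (simp add: V_simp)
    have okce: "ok Y (lam B t) (gword Y (lam B ce)) (lam B z)"
    proof -
      have "ok Y (gsrc Y (lam B ce)) (gword Y (lam B ce)) (gtgt Y (lam B ce))"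
        using ok_gword[OF Yg gm_el[OF lamM ceel]] .
      moreover have "gsrc Y (lam B ce) = lam B t" using gm_src[OF lamM ceel] unfolding t_def ce_def gtgt_def by simp
      moreover have "gtgt Y (lam B ce) = lam B z" using gm_tgt[OF lamM gB ceel] tce by simp
      ultimately show ?thesis by simp
    qed
    have "weq Y dag Q3 (T @ gword Y (lam B ce))"
      unfolding Q3_def using W1[OF Yg okT okce] by simp
    also have "weq Y dag (T @ gword Y (lam B ce)) ((q @ [Elt (lam B z) g]) @ gword Y (lam B e) @ gword Y (grev Y (lam B e)) @ [])"
      unfolding T_def using lce by (simp add: weq_refl)
    also have "weq Y dag \<dots> ((q @ [Elt (lam B z) g]) @ [])"
      using W3[OF Yg le, of dag "q @ [Elt (lam B z) g]" "[]"] okg srcl lzv by simp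
    finally have W: "weq Y dag Q3 (q @ [Elt (lam B z) g])" by simp
    have bmc: "bm B e c \<in> bset B z" using bm_closed[OF eel e(4)] e(2) by simp
    have V3: "Vt (Q3, z, bm B e c)" using zv bmc weq_ok[OF Yg weq_sym[OF W] okg] by (simp add: V_simp)
    have V4: "Vt (q @ [Elt (lam B z) g], z, bm B e c)" using zv bmc okg by (simp add: V_simp)
    have R2: "Rt (Q3, z, bm B e c) (q @ [Elt (lam B z) g], z, bm B e c)" using Rel_weq[OF V3 W] .
    have "Rt (q, z, b) (q @ [Elt (lam B z) g], z, bm B e c)"
      unfolding Rel_simp
      apply (rule conjI[OF refl])
      apply (rule bexI[of _ g])
      using e(3,5) weq_refl by simp_all
    from Rel_sym[OF assms(1) V4 this] have R3: "Rt (q @ [Elt (lam B z) g], z, bm B e c) (q, z, b)" .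
    obtain q' z' b' where P: "push Y B q z b l = (q', z', b')" by (cases "push Y B q z b l") auto
    have V0: "Vt (q', z', b')" using push_valid[OF assms(1,3)] P by simp
    from R1 P have "z = z'" by (simp add: Rel_simp)
    with R1 P have "Rt (q', z', b') (Q3, z', bm B e c)" by simp
    from Rel_trans[OF V0 _ V4 this] R2 R3 V3 \<open>z = z'\<close>
    have "Rt (q', z', b') (q @ [Elt (lam B z) g], z, bm B e c)" by simp
    from Rel_trans[OF V0 V4 assms(1) this R3] show ?thesis using P inv by simp
  next
    case (edge x h)
    with assms(3) have x: "x \<in> gedges X" "gsrc X x = rho B z" by auto
    have xel: "x \<in> gel X" using gr_edges_el[OF x(1)] .
    obtain e g c where d: "dec Y B z x b = (e, g, c)" by (cases "dec Y B z x b") auto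
    have i: "isdec Y B z x b e g c" using dec_isdec[OF zv(1) x zv(3)] d by simp
    from i have e: "e \<in> gedges (bgr B)" "gsrc (bgr B) e = z" "g \<in> carrier (ggrp Y (lam B z))"
      "c \<in> bset B e" "b = bl B z g (bm B e c)" "rho B e = x" unfolding isdec_def by auto
    have eel: "e \<in> gel (bgr B)" using gr_edges_el[OF e(1)] .
    have h: "h \<in> carrier (ggrp X (rho B e))" using edge e(6) by simp
    have hm: "ghm X x h \<in> carrier (ggrp X (rho B z))" using gog_hm_car[OF Xg xel] edge x(2) by simp
    have bmc: "bm B e c \<in> bset B z" using bm_closed[OF eel e(4)] e(2) by simp
    have brc: "br B e c h \<in> bset B e" using br_closed[OF eel h e(4)] .
    have "br B z b (ghm X x h) = bl B z g (br B z (bm B e c) (ghm X x h))"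
      using e(5) bl_br[OF zel e(3) hm bmc] by simp
    also have "br B z (bm B e c) (ghm X x h) = bm B e (br B e c h)"
      using bm_br[OF eel h e(4)] e(2,6) by simp
    finally have i2: "isdec Y B z x (br B z b (ghm X x h)) e g (br B e c h)"
      using e brc unfolding isdec_def by simp
    have Vb: "Vt (q, z, br B z b (ghm X x h))" using zv br_closed[OF zel hm zv(3)] by (simp add: V_simp)
    have ok1: "ok X (rho B z) [Edg x] (gtgt X x)" using x gr_tgt_vert[OF gX xel] by simp
    from Dany[OF Vb ok1 i2] have R: "Rt (push Y B q z (br B z b (ghm X x h)) [Edg x])
       (q @ Elt (lam B z) g # gword Y (lam B e), gtgt (bgr B) e, bm B (grev (bgr B) e) (bb B e (br B e c h)))"
      by simp
    have rel: "grev (bgr B) e \<in> gel (bgr B)" using gr_rev_el[OF gB eel] .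
    have rce: "rho B (grev (bgr B) e) = grev X x" using gm_rev[OF rhoM eel] e(6) by simp
    have hb: "gbr X x h \<in> carrier (ggrp X (rho B (grev (bgr B) e)))" using gog_br_car[OF Xg xel] edge rce by simp
    have "bm B (grev (bgr B) e) (bb B e (br B e c h))
          = bm B (grev (bgr B) e) (br B (grev (bgr B) e) (bb B e c) (gbr X x h))"
      using bb_br[OF eel h e(4)] e(6) by simp
    also have "\<dots> = br B (gtgt (bgr B) e) (bm B (grev (bgr B) e) (bb B e c)) (ghm X (grev X x) (gbr X x h))"
      using bm_br[OF rel hb bb_closed[OF eel e(4)]] rce by (simp add: gtgt_def)
    finally have eq: "bm B (grev (bgr B) e) (bb B e (br B e c h)) =
       br B (gtgt (bgr B) e) (bm B (grev (bgr B) e) (bb B e c)) (ghm X (grev X x) (gbr X x h))" .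
    show ?thesis using R eq edge d by simp
  qed
qed

lemma push_wstep: assumes "Vt (q, z, b)" "wstep X (rho B z) p p'"
  shows "Rt (push Y B q z b p) (push Y B q z b p')"
proof -
  from assms(2) obtain c l r w where g: "grel X l r" "p = c @ l @ w" "p' = c @ r @ w"
    and "\<exists>t. ok X (rho B z) p t" unfolding wstep_def by blast
  then obtain t where "ok X (rho B z) (c @ l @ w) t" by blast
  then have "\<exists>m m'. ok X (rho B z) c m \<and> ok X m l m' \<and> ok X m' w t" by (simp add: ok_append[OF gX])
  then obtain m m' where o: "ok X (rho B z) c m" "ok X m l m'" "ok X m' w t" by blast
  obtain q1 z1 b1 where P1: "push Y B q z b c = (q1, z1, b1)" by (cases "push Y B q z b c") auto
  have V1: "Vt (q1, z1, b1)" "rho B z1 = m" using push_valid[OF assms(1) o(1)] P1 by auto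
  obtain q2 z2 b2 where P2: "push Y B q1 z1 b1 l = (q2, z2, b2)" by (cases "push Y B q1 z1 b1 l") auto
  obtain q3 z3 b3 where P3: "push Y B q1 z1 b1 r = (q3, z3, b3)" by (cases "push Y B q1 z1 b1 r") auto
  have ol: "ok X (rho B z1) l m'" using o(2) V1(2) by simp
  have or: "ok X (rho B z1) r m'" using grel_ok[OF Xg g(1) ol] .
  have V2: "Vt (q2, z2, b2)" "rho B z2 = m'" using push_valid[OF V1(1) ol] P2 by auto
  have V3: "Vt (q3, z3, b3)" "rho B z3 = m'" using push_valid[OF V1(1) or] P3 by auto
  have R: "Rt (q2, z2, b2) (q3, z3, b3)" using push_grel[OF V1(1) g(1) ol] P2 P3 by simp
  then have "z3 = z2" by (simp add: Rel_simp)
  with push_Rel[of q2 z2 b2 q3 b3 w t] V2 V3 R o(3)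
  have "Rt (push Y B q2 z2 b2 w) (push Y B q3 z2 b3 w)" by simp
  then show ?thesis using g(2,3) P1 P2 P3 \<open>z3 = z2\<close> by (simp add: push_append)
qed

end


context GB begin

lemma brep_okD: "brep_ok Y X B dag st (q, z, b, p) \<longleftrightarrow>
   z \<in> gverts (bgr B) \<and> ok Y dag q (lam B z) \<and> b \<in> bset B z \<and> ok X (rho B z) p st"
  unfolding brep_ok_def by simp

lemma brep_V: "brep_ok Y X B dag st (q, z, b, p) \<Longrightarrow> Vt (q, z, b)"
  by (simp add: brep_okD V_simp)

lemma push_valid': "brep_ok Y X B dag st (q, z, b, p) \<Longrightarrow>
   (case push Y B q z b p of (q', z', b') \<Rightarrow> Vt (q', z', b') \<and> rho B z' = st)"
proof -
  assume a: "brep_ok Y X B dag st (q, z, b, p)"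
  then have "ok X (rho B z) p st" by (simp add: brep_okD)
  from push_valid[OF brep_V[OF a] this] show ?thesis .
qed

lemma push_tuple_V: "brep_ok Y X B dag st (q, z, b, p) \<Longrightarrow> push Y B q z b p = (q', z', b') \<Longrightarrow> Vt (q', z', b') \<and> rho B z' = st"
  using push_valid' by fastforce

lemma push_Rel': assumes "brep_ok Y X B dag st (q1, z, b1, p)" "brep_ok Y X B dag st (q2, z, b2, p)"
  "Rt (q1, z, b1) (q2, z, b2)" shows "Rt (push Y B q1 z b1 p) (push Y B q2 z b2 p)"
proof -
  have "ok X (rho B z) p st" using assms(1) by (simp add: brep_okD)
  then show ?thesis by (rule push_Rel[OF brep_V[OF assms(1)] brep_V[OF assms(2)] assms(3)])
qed

lemma Rel_sym_gen: assumes "Vt t" "Vt t'" "Rt t t'" shows "Rt t' t"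
  using Rel_sym assms by (cases t, cases t') blast

lemma Rel_trans_gen: assumes "Vt t" "Vt t'" "Vt t''" "Rt t t'" "Rt t' t''" shows "Rt t t''"
  using Rel_trans assms by (cases t, cases t', cases t'') blast

lemma Rel_refl_gen: assumes "Vt t" shows "Rt t t"
  using Rel_refl assms by (cases t) blast

lemma bstep_inv: assumes "bstep Y X B dag st t t'"
  shows "Rt (case t of (q, z, b, p) \<Rightarrow> push Y B q z b p) (case t' of (q, z, b, p) \<Rightarrow> push Y B q z b p)"
proof -
  from assms have raw: "bstep_raw Y X B dag t t'" and ok1: "brep_ok Y X B dag st t" and ok2: "brep_ok Y X B dag st t'"
    unfolding bstep_def by auto
  from raw show ?thesis
  proof (cases rule: bstep_raw.cases)
    case (left_word q q' z b p)
    have "weq Y dag q q'" using left_word(3) unfolding weq_def by blast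
    from Rel_weq[OF brep_V this] ok1 left_word have "Rt (q, z, b) (q', z, b)" by simp
    from push_Rel'[OF _ _ this] ok1 ok2 left_word show ?thesis by simp
  next
    case (right_word z p p' q b)
    from push_wstep[OF brep_V right_word(3)] ok1 right_word show ?thesis by simp
  next
    case (left_tensor g z q b p)
    have "Rt (q, z, bl B z g b) (q @ [Elt (lam B z) g], z, b)"
      unfolding Rel_simp
      apply (rule conjI[OF refl])
      apply (rule bexI[of _ g])
      using left_tensor(3) weq_refl by simp_all
    from Rel_sym[OF _ _ this] brep_V ok1 ok2 left_tensor
    have "Rt (q @ [Elt (lam B z) g], z, b) (q, z, bl B z g b)" by simp
    from push_Rel'[OF _ _ this] ok1 ok2 left_tensor show ?thesis by simp
  next
    case (right_tensor h z q b p)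
    obtain q' z' b' where P: "push Y B q z b (Elt (rho B z) h # p) = (q', z', b')"
      by (cases "push Y B q z b (Elt (rho B z) h # p)") auto
    have "Vt (q', z', b')" using push_tuple_V[OF _ P] ok2 right_tensor by simp
    then show ?thesis using Rel_refl P right_tensor by simp
  next
    case (edge z b q p)
    have zel: "z \<in> gel (bgr B)" using gr_edges_el[OF edge(3)] .
    have rz: "rho B z \<in> gedges X" using rhoS edge(3) unfolding simplicial_def by blast
    have rzel: "rho B z \<in> gel X" using gr_edges_el[OF rz] .
    have rrz: "grev X (rho B z) \<in> gedges X" using gr_rev_edge[OF gX rz] .
    have gw: "gword X (grev X (rho B z)) = [Edg (grev X (rho B z))]"
      using rrz unfolding gword_def gedges_def by auto
    define t where "t = gtgt (bgr B) z"
    define cz where "cz = grev (bgr B) z"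
    define s where "s = gsrc (bgr B) z"
    define Q where "Q = q @ gword Y (lam B z)"
    have ok2': "brep_ok Y X B dag st (Q, t, bm B cz (bb B z b), Edg (grev X (rho B z)) # p)"
      using ok2 edge gw unfolding Q_def t_def cz_def by simp
    have V2: "Vt (Q, t, bm B cz (bb B z b))" using brep_V[OF ok2'] .
    have tv: "t \<in> gverts (bgr B)" using V2 by (simp add: V_simp)
    have czel: "cz \<in> gel (bgr B)" unfolding cz_def using gr_rev_el[OF gB zel] .
    have czE: "cz \<in> gedges (bgr B)" unfolding cz_def using gr_rev_edge[OF gB edge(3)] .
    have rcz: "rho B cz = grev X (rho B z)" unfolding cz_def using gm_rev[OF rhoM zel] .
    have bbc: "bb B z b \<in> bset B cz" unfolding cz_def using bb_closed[OF zel edge(4)] .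
    have cp: "bm B cz (bb B z b) \<in> bset B t" using V2 by (simp add: V_simp)
    have G: "group (ggrp Y (lam B t))" using grpY[OF gr_verts_el[OF tv]] .
    have i2: "isdec Y B t (grev X (rho B z)) (bm B cz (bb B z b)) cz \<one>\<^bsub>ggrp Y (lam B t)\<^esub> (bb B z b)"
      unfolding isdec_def using czE rcz bbc bl_one[OF gr_verts_el[OF tv] cp] G
      by (simp add: cz_def t_def gtgt_def group.is_monoid monoid.one_closed)
    have okp: "ok X (rho B t) (Edg (grev X (rho B z)) # p) st" using ok2' by (simp add: brep_okD)
    have tcz: "gtgt (bgr B) cz = s" unfolding cz_def s_def using gr_tgt_rev[OF gB zel] .
    have rcz2: "grev (bgr B) cz = z" unfolding cz_def using gr_revrev[OF gB zel] .
    have bbb: "bb B cz (bb B z b) = b" unfolding cz_def using bb_bb[OF zel edge(4)] .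
    define Q3 where "Q3 = Q @ Elt (lam B t) \<one>\<^bsub>ggrp Y (lam B t)\<^esub> # gword Y (lam B cz)"
    from Dany[OF V2 okp i2] have R1: "Rt (push Y B Q t (bm B cz (bb B z b)) (Edg (grev X (rho B z)) # p))
        (push Y B Q3 s (bm B z b) p)"
      using tcz rcz2 bbb unfolding Q3_def by simp
    have le: "lam B z \<in> gel Y" using gm_el[OF lamM zel] .
    have lcz: "lam B cz = grev Y (lam B z)" unfolding cz_def using gm_rev[OF lamM zel] .
    have ok1': "brep_ok Y X B dag st (q, s, bm B z b, p)" using ok1 edge unfolding s_def by simp
    have V1: "Vt (q, s, bm B z b)" using brep_V[OF ok1'] .
    have okq: "ok Y dag q (lam B s)" using V1 by (simp add: V_simp)
    have srcl: "gsrc Y (lam B z) = lam B s" using gm_src[OF lamM zel] unfolding s_def by simp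
    have okQ: "ok Y dag Q (lam B t)" using V2 by (simp add: V_simp)
    have okcz: "ok Y (lam B t) (gword Y (lam B cz)) (lam B s)"
    proof -
      have "ok Y (gsrc Y (lam B cz)) (gword Y (lam B cz)) (gtgt Y (lam B cz))"
        using ok_gword[OF Yg gm_el[OF lamM czel]] .
      moreover have "gsrc Y (lam B cz) = lam B t" using gm_src[OF lamM czel] unfolding t_def cz_def gtgt_def by simp
      moreover have "gtgt Y (lam B cz) = lam B s" using gm_tgt[OF lamM gB czel] tcz by simp
      ultimately show ?thesis by simp
    qed
    have "weq Y dag Q3 (Q @ gword Y (lam B cz))"
      unfolding Q3_def using W1[OF Yg okQ okcz] by simp
    also have "weq Y dag (Q @ gword Y (lam B cz)) (q @ gword Y (lam B z) @ gword Y (grev Y (lam B z)) @ [])"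
      unfolding Q_def using lcz by (simp add: weq_refl)
    also have "weq Y dag \<dots> (q @ [])"
      using W3[OF Yg le, of dag q "[]"] okq srcl gm_vert[OF lamM gB gr_src_vert[OF gB zel]] s_def by simp
    finally have W: "weq Y dag Q3 q" by simp
    have V3: "Vt (Q3, s, bm B z b)" using V1 weq_ok[OF Yg weq_sym[OF W] okq] by (simp add: V_simp)
    have R2: "Rt (Q3, s, bm B z b) (q, s, bm B z b)" using Rel_weq[OF V3 W] .
    have ok3: "brep_ok Y X B dag st (Q3, s, bm B z b, p)" using V3 ok1' by (simp add: brep_okD V_simp)
    have R2': "Rt (push Y B Q3 s (bm B z b) p) (push Y B q s (bm B z b) p)" using push_Rel'[OF ok3 ok1' R2] .
    obtain a1 where A1: "push Y B Q t (bm B cz (bb B z b)) (Edg (grev X (rho B z)) # p) = a1" by blast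
    obtain a2 where A2: "push Y B Q3 s (bm B z b) p = a2" by blast
    obtain a3 where A3: "push Y B q s (bm B z b) p = a3" by blast
    have VA1: "Vt a1" using push_valid'[OF ok2'] A1 by (cases a1) auto
    have VA2: "Vt a2" using push_valid'[OF ok3] A2 by (cases a2) auto
    have VA3: "Vt a3" using push_valid'[OF ok1'] A3 by (cases a3) auto
    have "Rt a1 a3" using Rel_trans_gen[OF VA1 VA2 VA3] R1 R2' A1 A2 A3 by simp
    from Rel_sym_gen[OF VA1 VA3 this] have "Rt a3 a1" .
    then show ?thesis using A1 A3 edge gw unfolding Q_def t_def cz_def s_def by simp
  qed
qed

end


definition Fp :: "('y,'g) gog \<Rightarrow> ('z,'y,'x,'b,'g,'h) gob \<Rightarrow> ('z,'y,'x,'b,'g,'h) brep \<Rightarrow> ('y,'g) letter list \<times> 'z \<times> 'b" where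
  "Fp Y B t = (case t of (q, z, b, p) \<Rightarrow> push Y B q z b p)"

lemma Fp_simp[simp]: "Fp Y B (q, z, b, p) = push Y B q z b p" unfolding Fp_def by simp

lemma winv_left: assumes "is_gog X" "ok X v w u" "ok X d c u" "ok X u s t"
  shows "weq X d (c @ winv X w @ w @ s) (c @ s)"
proof -
  have g: "is_graph X" using assms gog_graph by blast
  define W where "W = winv X w"
  define W' where "W' = winv X W"
  have oW: "ok X u W v" unfolding W_def using winv_ok[OF assms(1,2)] .
  have oW': "ok X v W' u" unfolding W'_def using winv_ok[OF assms(1) oW] .
  have c1: "ok X d (c @ W @ w) u" using assms(2,3) oW ok_append[OF g] by blast
  have "weq X d ((c @ W @ w) @ W @ W' @ s) ((c @ W @ w) @ s)"
    using winv_cancel[OF assms(1) oW c1 assms(4)] unfolding W'_def .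
  then have 1: "weq X d (c @ W @ w @ s) (c @ W @ w @ W @ W' @ s)" by (simp add: weq_sym)
  have c2: "ok X d (c @ W) v" using assms(3) oW ok_append[OF g] by blast
  have s2: "ok X v (W' @ s) t" using oW' assms(4) ok_append[OF g] by blast
  have "weq X d ((c @ W) @ w @ W @ (W' @ s)) ((c @ W) @ (W' @ s))"
    using winv_cancel[OF assms(1) assms(2) c2 s2] unfolding W_def .
  then have 2: "weq X d (c @ W @ w @ W @ W' @ s) (c @ W @ W' @ s)" by simp
  have 3: "weq X d (c @ W @ W' @ s) (c @ s)" using winv_cancel[OF assms(1) oW assms(3,4)] unfolding W'_def .
  from weq_trans[OF 1 weq_trans[OF 2 3]] show ?thesis unfolding W_def .
qed

context GB begin

lemma beq_refl: "beq Y X B dag st t t" unfolding beq_def by simp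
lemma beq_trans: "beq Y X B dag st t t' \<Longrightarrow> beq Y X B dag st t' t'' \<Longrightarrow> beq Y X B dag st t t''"
  unfolding beq_def by (rule rtranclp_trans)
lemma beq_sym: "beq Y X B dag st t t' \<Longrightarrow> beq Y X B dag st t' t"
proof -
  have "symp (\<lambda>a b. bstep Y X B dag st a b \<or> bstep Y X B dag st b a)" by (auto simp: symp_def)
  then have "symp (beq Y X B dag st)" unfolding beq_def by (rule symp_rtranclp)
  then show "beq Y X B dag st t t' \<Longrightarrow> beq Y X B dag st t' t" by (rule sympD)
qed
lemma bstep_beq: "bstep Y X B dag st t t' \<Longrightarrow> beq Y X B dag st t t'"
  unfolding beq_def by blast
lemma bstep_beq': "bstep Y X B dag st t' t \<Longrightarrow> beq Y X B dag st t t'"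
  unfolding beq_def by blast

lemma Fp_valid: "brep_ok Y X B dag st t \<Longrightarrow> Vt (Fp Y B t)"
proof -
  assume a: "brep_ok Y X B dag st t"
  obtain q z b p where t: "t = (q, z, b, p)" by (cases t) auto
  obtain q' z' b' where P: "push Y B q z b p = (q', z', b')" by (cases "push Y B q z b p") auto
  show ?thesis using push_tuple_V[OF _ P] a t P by simp
qed

lemma beq_inv: assumes "beq Y X B dag st t t'" "brep_ok Y X B dag st t"
  shows "Rt (Fp Y B t) (Fp Y B t')"
  using assms(1) unfolding beq_def
proof (induction rule: rtranclp_induct)
  case base then show ?case using Rel_refl_gen[OF Fp_valid[OF assms(2)]] .
next
  case (step y z)
  from step(2) have oy: "brep_ok Y X B dag st y" and oz: "brep_ok Y X B dag st z"
    unfolding bstep_def by auto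
  from step(2) have "Rt (Fp Y B y) (Fp Y B z)"
  proof
    assume "bstep Y X B dag st y z"
    from bstep_inv[OF this] show ?thesis by (cases y, cases z) simp
  next
    assume "bstep Y X B dag st z y"
    from bstep_inv[OF this] have "Rt (Fp Y B z) (Fp Y B y)" by (cases y, cases z) simp
    from Rel_sym_gen[OF Fp_valid[OF oz] Fp_valid[OF oy] this] show ?thesis .
  qed
  from Rel_trans_gen[OF Fp_valid[OF assms(2)] Fp_valid[OF oy] Fp_valid[OF oz] step(3) this] show ?case .
qed

lemma weq_beq: assumes "weq Y dag q q'" "brep_ok Y X B dag st (q, z, b, p)"
  shows "beq Y X B dag st (q, z, b, p) (q', z, b, p)"
  using assms(1) unfolding weq_def
proof (induction rule: rtranclp_induct)
  case base then show ?case by (rule beq_refl)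
next
  case (step y y')
  have oq: "ok Y dag q (lam B z)" using assms(2) by (simp add: brep_okD)
  have "ok Y dag y (lam B z)" using weq_ok[OF Yg _ oq] step(1) unfolding weq_def by blast
  then have o1: "brep_ok Y X B dag st (y, z, b, p)" using assms(2) by (simp add: brep_okD)
  have "ok Y dag y' (lam B z)"
    using step(2) wstep_ok[OF Yg _ \<open>ok Y dag y (lam B z)\<close>] wstep_ok'[OF Yg _ \<open>ok Y dag y (lam B z)\<close>]
    by blast
  then have o2: "brep_ok Y X B dag st (y', z, b, p)" using assms(2) by (simp add: brep_okD)
  from step(2) have "beq Y X B dag st (y, z, b, p) (y', z, b, p)"
  proof
    assume w: "wstep Y dag y y'"
    have "bstep_raw Y X B dag (y, z, b, p) (y', z, b, p)" by (rule bstep_raw.left_word[OF w])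
    then have "bstep Y X B dag st (y, z, b, p) (y', z, b, p)"
      unfolding bstep_def using o1 o2 by blast
    then show ?thesis by (rule bstep_beq)
  next
    assume w: "wstep Y dag y' y"
    have "bstep_raw Y X B dag (y', z, b, p) (y, z, b, p)" by (rule bstep_raw.left_word[OF w])
    then have "bstep Y X B dag st (y', z, b, p) (y, z, b, p)"
      unfolding bstep_def using o1 o2 by blast
    then show ?thesis by (rule bstep_beq')
  qed
  with step(3) show ?case by (rule beq_trans)
qed

lemma normal_form: "brep_ok Y X B dag st (q, z, b, p) \<Longrightarrow>
   beq Y X B dag st (q, z, b, p) (case push Y B q z b p of (q', z', b') \<Rightarrow> (q', z', b', []))"
proof (induction p arbitrary: q z b)
  case Nil then show ?case by (simp add: beq_refl)
next
  case (Cons l p)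
  have zv: "z \<in> gverts (bgr B)" "ok Y dag q (lam B z)" "b \<in> bset B z" "ok X (rho B z) (l # p) st"
    using Cons.prems by (auto simp: brep_okD)
  have zel: "z \<in> gel (bgr B)" using gr_verts_el[OF zv(1)] .
  show ?case
  proof (cases l)
    case (Elt y h)
    with zv(4) have h: "y = rho B z" "h \<in> carrier (ggrp X (rho B z))" "ok X (rho B z) p st" by auto
    have o1: "brep_ok Y X B dag st (q, z, br B z b h, p)"
      using zv h br_closed[OF zel h(2) zv(3)] by (simp add: brep_okD)
    have "bstep Y X B dag st (q, z, br B z b h, p) (q, z, b, l # p)"
      unfolding bstep_def using o1 Cons.prems bstep_raw.right_tensor[OF h(2)] Elt h(1) by blast
    then have "beq Y X B dag st (q, z, b, l # p) (q, z, br B z b h, p)" by (rule bstep_beq')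
    from beq_trans[OF this Cons.IH[OF o1]] show ?thesis using Elt by simp
  next
    case (Edg f)
    with zv(4) have f: "f \<in> gedges X" "gsrc X f = rho B z" "ok X (gtgt X f) p st" by auto
    have fel: "f \<in> gel X" using gr_edges_el[OF f(1)] .
    obtain e g c where d: "dec Y B z f b = (e, g, c)" by (cases "dec Y B z f b") auto
    have i: "isdec Y B z f b e g c" using dec_isdec[OF zv(1) f(1,2) zv(3)] d by simp
    from i have e: "e \<in> gedges (bgr B)" "gsrc (bgr B) e = z" "g \<in> carrier (ggrp Y (lam B z))"
      "c \<in> bset B e" "b = bl B z g (bm B e c)" "rho B e = f" unfolding isdec_def by auto
    have eel: "e \<in> gel (bgr B)" using gr_edges_el[OF e(1)] .
    have lzv: "lam B z \<in> gverts Y" using gm_vert[OF lamM gB zv(1)] .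
    have bmc: "bm B e c \<in> bset B z" using bm_closed[OF eel e(4)] e(2) by simp
    have okg: "ok Y dag (q @ [Elt (lam B z) g]) (lam B z)" using zv(2) e(3) lzv ok_append[OF gY] by simp
    have o1: "brep_ok Y X B dag st (q @ [Elt (lam B z) g], z, bm B e c, l # p)"
      using zv okg bmc by (simp add: brep_okD)
    have "bstep_raw Y X B dag (q @ [Elt (lam B z) g], z, bm B e c, l # p) (q, z, bl B z g (bm B e c), l # p)"
      by (rule bstep_raw.left_tensor[OF e(3)])
    then have "bstep Y X B dag st (q @ [Elt (lam B z) g], z, bm B e c, l # p) (q, z, b, l # p)"
      unfolding bstep_def using o1 Cons.prems e(5) by simp
    then have s1: "beq Y X B dag st (q, z, b, l # p) (q @ [Elt (lam B z) g], z, bm B e c, l # p)" by (rule bstep_beq')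
    define T where "T = q @ Elt (lam B z) g # gword Y (lam B e)"
    define t where "t = gtgt (bgr B) e"
    define c' where "c' = bm B (grev (bgr B) e) (bb B e c)"
    have V1: "Vt (T, t, c')" and rt: "rho B t = gtgt X f"
      using isdec_valid[OF zv(1,2) i] unfolding T_def t_def c'_def by auto
    have rf: "grev X f \<in> gedges X" using gr_rev_edge[OF gX f(1)] .
    have gw: "gword X (grev X (rho B e)) = [Edg (grev X f)]"
      using rf e(6) unfolding gword_def gedges_def by auto
    have okp: "ok X (rho B t) (Edg (grev X f) # Edg f # p) st"
      using rt rf f gr_tgt_rev[OF gX fel] by (simp add: gtgt_def)
    have o2: "brep_ok Y X B dag st (T, t, c', Edg (grev X f) # Edg f # p)"
      using V1 okp by (simp add: brep_okD V_simp)
    have "bstep_raw Y X B dag (q @ [Elt (lam B z) g], gsrc (bgr B) e, bm B e c, Edg f # p)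
        ((q @ [Elt (lam B z) g]) @ gword Y (lam B e), gtgt (bgr B) e, bm B (grev (bgr B) e) (bb B e c),
         gword X (grev X (rho B e)) @ Edg f # p)"
      by (rule bstep_raw.edge[OF e(1,4)])
    then have "bstep Y X B dag st (q @ [Elt (lam B z) g], z, bm B e c, l # p) (T, t, c', Edg (grev X f) # Edg f # p)"
      unfolding bstep_def using o1 o2 e(2) gw Edg unfolding T_def t_def c'_def by simp
    then have s2: "beq Y X B dag st (q @ [Elt (lam B z) g], z, bm B e c, l # p) (T, t, c', Edg (grev X f) # Edg f # p)"
      by (rule bstep_beq)
    have o3: "brep_ok Y X B dag st (T, t, c', p)" using V1 rt f(3) by (simp add: brep_okD V_simp)
    have gi: "grel X [Edg (grev X f), Edg f] []" using grel.inv[OF rf] gr_revrev[OF gX fel] by simp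
    have "wstep X (rho B t) (Edg (grev X f) # Edg f # p) p"
      unfolding wstep_def
      apply (intro conjI)
      apply (rule exI[of _ "[]"], rule exI[of _ "[Edg (grev X f), Edg f]"], rule exI[of _ "[]"], rule exI[of _ p])
      using gi apply simp
      using okp apply blast
      using rt f(3) by auto
    then have "bstep_raw Y X B dag (T, t, c', Edg (grev X f) # Edg f # p) (T, t, c', p)"
      by (rule bstep_raw.right_word)
    then have "bstep Y X B dag st (T, t, c', Edg (grev X f) # Edg f # p) (T, t, c', p)"
      unfolding bstep_def using o2 o3 by blast
    then have s3: "beq Y X B dag st (T, t, c', Edg (grev X f) # Edg f # p) (T, t, c', p)" by (rule bstep_beq)
    have "push Y B q z b (l # p) = push Y B T t c' p" using Edg d unfolding T_def t_def c'_def by simp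
    from beq_trans[OF s1 beq_trans[OF s2 beq_trans[OF s3 Cons.IH[OF o3]]]] show ?thesis
      using \<open>push Y B q z b (l # p) = push Y B T t c' p\<close> by simp
  qed
qed

lemma left_free: "fbiset_left_free Y X B dag st"
  unfolding fbiset_left_free_def
proof (intro allI impI)
  fix \<gamma> t
  assume og: "ok Y dag \<gamma> dag" and ot: "brep_ok Y X B dag st t" and bq: "beq Y X B dag st (bact \<gamma> t) t"
  obtain q z b p where t: "t = (q, z, b, p)" by (cases t) auto
  have ot': "brep_ok Y X B dag st (\<gamma> @ q, z, b, p)"
    using ot og ok_append[OF gY] unfolding t by (auto simp: brep_okD)
  obtain q' z' b' where P: "push Y B q z b p = (q', z', b')" by (cases "push Y B q z b p") auto
  have Vq: "Vt (q', z', b')" using push_tuple_V[OF _ P] ot t by simp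
  then have zv: "z' \<in> gverts (bgr B)" "ok Y dag q' (lam B z')" "b' \<in> bset B z'" by (auto simp: V_simp)
  from beq_inv[OF bq] ot' have "Rt (Fp Y B (\<gamma> @ q, z, b, p)) (Fp Y B t)" unfolding t bact_def by simp
  then have "Rt (\<gamma> @ q', z', b') (q', z', b')" using P t push_pre[of Y B \<gamma> q z b p] by simp
  then obtain g where g: "g \<in> carrier (ggrp Y (lam B z'))" "b' = bl B z' g b'"
    "weq Y dag (\<gamma> @ q' @ [Elt (lam B z') g]) q'" by (auto simp: Rel_simp)
  have "g = \<one>\<^bsub>ggrp Y (lam B z')\<^esub>" using lfree[OF gr_verts_el[OF zv(1)] g(1) zv(3)] g(2) by simp
  have oq: "ok Y dag (\<gamma> @ q') (lam B z')" using og zv(2) ok_append[OF gY] by blast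
  have lzv: "lam B z' \<in> gverts Y" using gm_vert[OF lamM gB zv(1)] .
  have "weq Y dag ((\<gamma> @ q') @ [Elt (lam B z') g]) (\<gamma> @ q')"
    using W1[OF Yg oq, of "[]"] lzv \<open>g = _\<close> by simp
  then have w1: "weq Y dag (\<gamma> @ q') q'" using g(3) weq_sym weq_trans by (metis append.assoc)
  define W where "W = winv Y q'"
  have dv: "ok Y dag [] dag" using dagv by simp
  have "weq Y dag (\<gamma> @ q' @ W @ []) (\<gamma> @ [])" unfolding W_def using winv_cancel[OF Yg zv(2) og dv] .
  then have a: "weq Y dag \<gamma> (\<gamma> @ q' @ W)" by (simp add: weq_sym)
  have oW: "ok Y (lam B z') W dag" unfolding W_def using winv_ok[OF Yg zv(2)] .
  have b: "weq Y dag ((\<gamma> @ q') @ W) (q' @ W)" using weq_app[OF Yg w1 oq oW] .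
  have "weq Y dag ([] @ q' @ W @ []) ([] @ [])" unfolding W_def using winv_cancel[OF Yg zv(2) dv dv] .
  then have c: "weq Y dag (q' @ W) []" by simp
  show "weq Y dag \<gamma> []" using weq_trans[OF a weq_trans[OF _ c]] b by simp
qed

end


lemma quot_eqpoll: "A // {(a, b). a \<in> A \<and> b \<in> A \<and> h a = h b} \<approx> h ` A"
proof -
  let ?E = "{(a, b). a \<in> A \<and> b \<in> A \<and> h a = h b}"
  have cls: "\<And>a. a \<in> A \<Longrightarrow> ?E``{a} = {b \<in> A. h b = h a}" by auto
  define \<phi> where "\<phi> C = h (SOME a. a \<in> C)" for C
  have pa: "\<phi> (?E``{a}) = h a" if "a \<in> A" for a
  proof -
    have "a \<in> ?E``{a}" using that by simp
    then have "(SOME x. x \<in> ?E``{a}) \<in> ?E``{a}" by (rule someI)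
    then show ?thesis unfolding \<phi>_def using that by simp
  qed
  have "bij_betw \<phi> (A // ?E) (h ` A)"
  proof (rule bij_betw_imageI)
    show "inj_on \<phi> (A // ?E)"
    proof (rule inj_onI)
      fix C1 C2 assume "C1 \<in> A // ?E" "C2 \<in> A // ?E" "\<phi> C1 = \<phi> C2"
      then obtain a1 a2 where a: "C1 = ?E``{a1}" "a1 \<in> A" "C2 = ?E``{a2}" "a2 \<in> A" "\<phi> C1 = \<phi> C2"
        by (auto elim!: quotientE)
      then have "h a1 = h a2" using pa by simp
      then show "C1 = C2" using a cls by simp
    qed
    show "\<phi> ` (A // ?E) = h ` A"
    proof
      show "\<phi> ` (A // ?E) \<subseteq> h ` A" using pa by (auto elim!: quotientE)
      show "h ` A \<subseteq> \<phi> ` (A // ?E)"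
      proof
        fix y assume "y \<in> h ` A"
        then obtain a where "a \<in> A" "y = h a" by blast
        then have "y = \<phi> (?E``{a})" "?E``{a} \<in> A // ?E" using pa[of a] quotientI[of a A ?E] by simp_all
        then show "y \<in> \<phi> ` (A // ?E)" by blast
      qed
    qed
  qed
  then show ?thesis unfolding eqpoll_def by blast
qed

context GB begin

definition Rz :: "'z \<Rightarrow> ('b \<times> 'b) set" where
  "Rz z = {(b, b'). b \<in> bset B z \<and> b' \<in> bset B z \<and> (\<exists>g\<in>carrier (ggrp Y (lam B z)). b' = bl B z g b)}"

lemma Rz_equiv: assumes "z \<in> gel (bgr B)" shows "equiv (bset B z) (Rz z)"
proof -
  have G: "group (ggrp Y (lam B z))" using grpY[OF assms] .
  have "refl_on (bset B z) (Rz z)"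
    unfolding refl_on_def Rz_def
  proof (intro ballI)
    fix x assume x: "x \<in> bset B z"
    have "\<one>\<^bsub>ggrp Y (lam B z)\<^esub> \<in> carrier (ggrp Y (lam B z))" using G by (simp add: group.is_monoid monoid.one_closed)
    then show "(x, x) \<in> {(b, b'). b \<in> bset B z \<and> b' \<in> bset B z \<and> (\<exists>g\<in>carrier (ggrp Y (lam B z)). b' = bl B z g b)}"
      using x bl_one[OF assms x] by force
  qed
  moreover have "sym (Rz z)"
    unfolding sym_def Rz_def
  proof (intro allI impI)
    fix x y assume "(x, y) \<in> {(b, b'). b \<in> bset B z \<and> b' \<in> bset B z \<and> (\<exists>g\<in>carrier (ggrp Y (lam B z)). b' = bl B z g b)}"
    then obtain g where g: "x \<in> bset B z" "y \<in> bset B z" "g \<in> carrier (ggrp Y (lam B z))" "y = bl B z g x" by blast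
    let ?i = "inv\<^bsub>ggrp Y (lam B z)\<^esub> g"
    have ig: "?i \<in> carrier (ggrp Y (lam B z))" using G g(3) by (simp add: group.inv_closed)
    have "bl B z ?i y = bl B z (?i \<otimes>\<^bsub>ggrp Y (lam B z)\<^esub> g) x" using g bl_mult[OF assms ig g(3) g(1)] by simp
    also have "\<dots> = x" using G g bl_one[OF assms g(1)] by (simp add: group.l_inv)
    finally show "(y, x) \<in> {(b, b'). b \<in> bset B z \<and> b' \<in> bset B z \<and> (\<exists>g\<in>carrier (ggrp Y (lam B z)). b' = bl B z g b)}"
      using g ig by force
  qed
  moreover have "trans (Rz z)"
    unfolding trans_def Rz_def
  proof (intro allI impI)
    fix x y w assume "(x, y) \<in> {(b, b'). b \<in> bset B z \<and> b' \<in> bset B z \<and> (\<exists>g\<in>carrier (ggrp Y (lam B z)). b' = bl B z g b)}"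
      "(y, w) \<in> {(b, b'). b \<in> bset B z \<and> b' \<in> bset B z \<and> (\<exists>g\<in>carrier (ggrp Y (lam B z)). b' = bl B z g b)}"
    then obtain g h where g: "x \<in> bset B z" "y \<in> bset B z" "g \<in> carrier (ggrp Y (lam B z))" "y = bl B z g x"
      "w \<in> bset B z" "h \<in> carrier (ggrp Y (lam B z))" "w = bl B z h y" by blast
    have hg: "h \<otimes>\<^bsub>ggrp Y (lam B z)\<^esub> g \<in> carrier (ggrp Y (lam B z))" using G g by (simp add: group.is_monoid monoid.m_closed)
    have "w = bl B z (h \<otimes>\<^bsub>ggrp Y (lam B z)\<^esub> g) x" using g bl_mult[OF assms g(6) g(3) g(1)] by simp
    then show "(x, w) \<in> {(b, b'). b \<in> bset B z \<and> b' \<in> bset B z \<and> (\<exists>g\<in>carrier (ggrp Y (lam B z)). b' = bl B z g b)}"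
      using g hg by force
  qed
  moreover have "Rz z \<subseteq> bset B z \<times> bset B z" unfolding Rz_def by auto
  ultimately show ?thesis unfolding equiv_def by blast
qed

definition hh :: "('z,'y,'x,'b,'g,'h) brep \<Rightarrow> 'z \<times> 'b set" where
  "hh t = (case Fp Y B t of (q', z', b') \<Rightarrow> (z', Rz z' `` {b'}))"

lemma fiber_eq: "fiber_orbits Y X B st = (SIGMA z:{z\<in>gel (bgr B). rho B z = st}. bset B z // Rz z)"
  unfolding fiber_orbits_def Rz_def by simp


lemma hh_tuple: "push Y B q z b p = (q', z', b') \<Longrightarrow> hh (q, z, b, p) = (z', Rz z' `` {b'})"
  unfolding hh_def by simp

lemma E_iff: assumes o1: "brep_ok Y X B dag st t" and o2: "brep_ok Y X B dag st t'"
  shows "(\<exists>\<gamma>. ok Y dag \<gamma> dag \<and> beq Y X B dag st (bact \<gamma> t) t') \<longleftrightarrow> hh t = hh t'"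
proof -
  obtain q z b p where t: "t = (q, z, b, p)" by (cases t) auto
  obtain q2 z2 b2 p2 where t': "t' = (q2, z2, b2, p2)" by (cases t') auto
  obtain Q1 z1 b1 where P1: "push Y B q z b p = (Q1, z1, b1)" by (cases "push Y B q z b p") auto
  obtain Q2 w2 c2 where P2: "push Y B q2 z2 b2 p2 = (Q2, w2, c2)" by (cases "push Y B q2 z2 b2 p2") auto
  have V1: "Vt (Q1, z1, b1)" "rho B z1 = st" using push_tuple_V[OF _ P1] o1 t by auto
  have V2: "Vt (Q2, w2, c2)" "rho B w2 = st" using push_tuple_V[OF _ P2] o2 t' by auto
  have v1: "z1 \<in> gverts (bgr B)" "ok Y dag Q1 (lam B z1)" "b1 \<in> bset B z1" using V1 by (auto simp: V_simp)
  have v2: "w2 \<in> gverts (bgr B)" "ok Y dag Q2 (lam B w2)" "c2 \<in> bset B w2" using V2 by (auto simp: V_simp)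
  have h1: "hh t = (z1, Rz z1 `` {b1})" using hh_tuple[OF P1] t by simp
  have h2: "hh t' = (w2, Rz w2 `` {c2})" using hh_tuple[OF P2] t' by simp
  have z1el: "z1 \<in> gel (bgr B)" using gr_verts_el[OF v1(1)] .
  show ?thesis
  proof
    assume "\<exists>\<gamma>. ok Y dag \<gamma> dag \<and> beq Y X B dag st (bact \<gamma> t) t'"
    then obtain \<gamma> where g: "ok Y dag \<gamma> dag" "beq Y X B dag st (bact \<gamma> t) t'" by blast
    have ob: "brep_ok Y X B dag st (bact \<gamma> t)"
      using o1 g(1) ok_append[OF gY] unfolding t bact_def by (auto simp: brep_okD)
    from beq_inv[OF g(2) ob] have "Rt (Fp Y B (bact \<gamma> t)) (Fp Y B t')" .
    then have "Rt (\<gamma> @ Q1, z1, b1) (Q2, w2, c2)" using P1 P2 t t' push_pre[of Y B \<gamma> q z b p]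
      unfolding bact_def by simp
    then obtain g where "w2 = z1" "g \<in> carrier (ggrp Y (lam B z1))" "b1 = bl B z1 g c2" by (auto simp: Rel_simp)
    then have "(c2, b1) \<in> Rz z1" unfolding Rz_def using v1 v2 by auto
    then have "Rz z1 `` {c2} = Rz z1 `` {b1}" using eq_equiv_class_iff[OF Rz_equiv[OF z1el]] v1 v2 \<open>w2 = z1\<close> by simp
    then show "hh t = hh t'" using h1 h2 \<open>w2 = z1\<close> by simp
  next
    assume "hh t = hh t'"
    then have w: "w2 = z1" "Rz z1 `` {b1} = Rz z1 `` {c2}" using h1 h2 by auto
    then have "(b1, c2) \<in> Rz z1" using eq_equiv_class_iff[OF Rz_equiv[OF z1el]] v1 v2 by simp
    then obtain g where g: "g \<in> carrier (ggrp Y (lam B z1))" "c2 = bl B z1 g b1" unfolding Rz_def by auto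
    have lzv: "lam B z1 \<in> gverts Y" using gm_vert[OF lamM gB v1(1)] .
    define \<gamma> where "\<gamma> = Q2 @ [Elt (lam B z1) g] @ winv Y Q1"
    have oQ2g: "ok Y dag (Q2 @ [Elt (lam B z1) g]) (lam B z1)" using v2(2) w g(1) lzv ok_append[OF gY] by simp
    have og: "ok Y dag \<gamma> dag" unfolding \<gamma>_def using oQ2g winv_ok[OF Yg v1(2)] ok_append[OF gY] by (metis append.assoc)
    have ob: "brep_ok Y X B dag st (\<gamma> @ q, z, b, p)"
      using o1 og ok_append[OF gY] unfolding t by (auto simp: brep_okD)
    have s1: "beq Y X B dag st (\<gamma> @ q, z, b, p) (\<gamma> @ Q1, z1, b1, [])"
      using normal_form[OF ob] push_pre[of Y B \<gamma> q z b p] P1 by simp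
    have dv: "ok Y (lam B z1) [] (lam B z1)" using lzv by simp
    have "weq Y dag ((Q2 @ [Elt (lam B z1) g]) @ winv Y Q1 @ Q1 @ []) ((Q2 @ [Elt (lam B z1) g]) @ [])"
      using winv_left[OF Yg v1(2) oQ2g dv] .
    then have wq: "weq Y dag (\<gamma> @ Q1) (Q2 @ [Elt (lam B z1) g])" unfolding \<gamma>_def by simp
    have ob2: "brep_ok Y X B dag st (\<gamma> @ Q1, z1, b1, [])"
      using og v1 V1(2) ok_append[OF gY] stv by (auto simp: brep_okD)
    have s2: "beq Y X B dag st (\<gamma> @ Q1, z1, b1, []) (Q2 @ [Elt (lam B z1) g], z1, b1, [])"
      using weq_beq[OF wq ob2] .
    have ob3: "brep_ok Y X B dag st (Q2 @ [Elt (lam B z1) g], z1, b1, [])"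
      using oQ2g v1 V1(2) stv by (auto simp: brep_okD)
    have ob4: "brep_ok Y X B dag st (Q2, z1, c2, [])"
      using v2 w V1(2) stv by (auto simp: brep_okD)
    have "bstep_raw Y X B dag (Q2 @ [Elt (lam B z1) g], z1, b1, []) (Q2, z1, bl B z1 g b1, [])"
      by (rule bstep_raw.left_tensor[OF g(1)])
    then have "bstep Y X B dag st (Q2 @ [Elt (lam B z1) g], z1, b1, []) (Q2, z1, c2, [])"
      unfolding bstep_def using ob3 ob4 g(2) by simp
    then have s3: "beq Y X B dag st (Q2 @ [Elt (lam B z1) g], z1, b1, []) (Q2, z1, c2, [])" by (rule bstep_beq)
    have s4: "beq Y X B dag st t' (Q2, z1, c2, [])" using normal_form[of q2 z2 b2 p2] o2 P2 w t' by simp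
    have "beq Y X B dag st (bact \<gamma> t) t'"
      unfolding t bact_def using beq_trans[OF s1 beq_trans[OF s2 beq_trans[OF s3 beq_sym[OF s4]]]] by simp
    then show "\<exists>\<gamma>. ok Y dag \<gamma> dag \<and> beq Y X B dag st (bact \<gamma> t) t'" using og by blast
  qed
qed

lemma hh_image: "hh ` {t. brep_ok Y X B dag st t} = fiber_orbits Y X B st"
proof
  show "hh ` {t. brep_ok Y X B dag st t} \<subseteq> fiber_orbits Y X B st"
  proof
    fix y assume "y \<in> hh ` {t. brep_ok Y X B dag st t}"
    then obtain t where o: "brep_ok Y X B dag st t" "y = hh t" by blast
    obtain q z b p where t: "t = (q, z, b, p)" by (cases t) auto
    obtain Q1 z1 b1 where P1: "push Y B q z b p = (Q1, z1, b1)" by (cases "push Y B q z b p") auto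
    have V1: "Vt (Q1, z1, b1)" "rho B z1 = st" using push_tuple_V[OF _ P1] o t by auto
    have v1: "z1 \<in> gverts (bgr B)" "b1 \<in> bset B z1" using V1 by (auto simp: V_simp)
    have "y = (z1, Rz z1 `` {b1})" using hh_tuple[OF P1] o t by simp
    then show "y \<in> fiber_orbits Y X B st" unfolding fiber_eq
      using v1 V1(2) gr_verts_el[OF v1(1)] quotientI[OF v1(2)] by auto
  qed
  show "fiber_orbits Y X B st \<subseteq> hh ` {t. brep_ok Y X B dag st t}"
  proof
    fix y assume "y \<in> fiber_orbits Y X B st"
    then obtain z C where y: "y = (z, C)" "z \<in> gel (bgr B)" "rho B z = st" "C \<in> bset B z // Rz z"
      unfolding fiber_eq by blast
    from y(4) obtain b where b: "C = Rz z `` {b}" "b \<in> bset B z" by (auto elim: quotientE)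
    have zv: "z \<in> gverts (bgr B)"
    proof (rule ccontr)
      assume "z \<notin> gverts (bgr B)"
      then have "z \<in> gedges (bgr B)" using gr_el_cases[OF y(2)] by blast
      then have "rho B z \<in> gedges X" using rhoS unfolding simplicial_def by blast
      then show False using stv y(3) unfolding gverts_def gedges_def by auto
    qed
    have lzv: "lam B z \<in> gverts Y" using gm_vert[OF lamM gB zv] .
    obtain q where q: "ok Y dag q (lam B z)" using Yg dagv lzv unfolding is_gog_def connected_def by blast
    have o: "brep_ok Y X B dag st (q, z, b, [])" using zv q b(2) y(3) stv by (auto simp: brep_okD)
    have "hh (q, z, b, []) = y" using hh_tuple[of q z b "[]" q z b] y b by simp
    then show "y \<in> hh ` {t. brep_ok Y X B dag st t}" using o by force
  qed
qed

lemma orbits: "fbiset_orbits Y X B dag st \<approx> fiber_orbits Y X B st"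
proof -
  let ?A = "{t. brep_ok Y X B dag st t}"
  have "{(t, t'). brep_ok Y X B dag st t \<and> brep_ok Y X B dag st t' \<and>
        (\<exists>\<gamma>. ok Y dag \<gamma> dag \<and> beq Y X B dag st (bact \<gamma> t) t')}
        = {(a, b). a \<in> ?A \<and> b \<in> ?A \<and> hh a = hh b}"
  proof (rule Set.set_eqI)
    fix x :: "(('y,'g) letter list \<times> 'z \<times> 'b \<times> ('x,'h) letter list) \<times> (('y,'g) letter list \<times> 'z \<times> 'b \<times> ('x,'h) letter list)"
    obtain t t' where x: "x = (t, t')" by (cases x) auto
    show "x \<in> {(t, t'). brep_ok Y X B dag st t \<and> brep_ok Y X B dag st t' \<and>
        (\<exists>\<gamma>. ok Y dag \<gamma> dag \<and> beq Y X B dag st (bact \<gamma> t) t')} \<longleftrightarrow>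
        x \<in> {(a, b). a \<in> ?A \<and> b \<in> ?A \<and> hh a = hh b}"
      unfolding x using E_iff[of t t'] by auto
  qed
  then have "fbiset_orbits Y X B dag st = ?A // {(a, b). a \<in> ?A \<and> b \<in> ?A \<and> hh a = hh b}"
    unfolding fbiset_orbits_def by simp
  also have "\<dots> \<approx> hh ` ?A" by (rule quot_eqpoll)
  finally show ?thesis unfolding hh_image .
qed

end

theorem mainTheorem17:
  fixes Y :: "('y,'g) gog" and X :: "('x,'h) gog" and B :: "('z,'y,'x,'b,'g,'h) gob"
    and dag :: 'y and st :: 'x
  assumes "is_gog Y" and "is_gog X" and "is_gob Y X B"
    and "left_free_gob Y X B"
    and "dag \<in> gverts Y" and "st \<in> gverts X"
  shows "fbiset_left_free Y X B dag st \<and> fbiset_orbits Y X B dag st \<approx> fiber_orbits Y X B st"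
proof -
  interpret GB Y X B dag st using assms by unfold_locales
  show ?thesis using left_free orbits by blast
qed


end
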